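(* Let $r:\mathcal T\to\mathbb N\cup\{0\}$ be a function satisfying: (1) $r(\mathscr X)=0$ if and only if $\mathscr X=\mathbf 0$, and $r(\mathscr X)=1$ if and only if $\mathscr X$ is a rank-one tensor; (2) $r$ is constant on equivalence classes of $\sim$; (3) if $\mathscr X$ is a tensor of order $N$ with $\mathscr X\neq\mathbf 0$ and $\mathscr X$ not rank-one, then with $S_0=\{M\mid \mathscr I_{M,N}\text{ is a subtensor of some }\mathscr Y\sim\mathscr X\}$ and $S_1=\{\operatorname{rank}(\mathbf A)\mid \mathbf A\text{ is a submatrix of some }\mathscr Y\sim\mathscr X\}$ we have $r(\mathscr X)=\max(S_0\cup S_1\cup\{2\})$. Then $r=\mu$, where $\mu(\mathscr X)=\min\{s(\mathscr X)\mid s\text{ is a QZC rank function}\}$ for every $\mathscr X\in\mathcal T$.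
   Context: $\mathcal T$ is the collection of all real tensors (of all orders $N\ge1$ and all sizes). A rank-one tensor is one of the form $\mathbf a^{(1)}\circ\cdots\circ\mathbf a^{(N)}$, i.e. $x_{i_1\cdots i_N}=a^{(1)}_{i_1}\cdots a^{(N)}_{i_N}$, with all $\mathbf a^{(n)}$ nonzero vectors. $\mathscr I_{M,N}$ is the order-$N$ tensor of size $M\times\cdots\times M$ with $1$ in positions $(i,\dots,i)$ and $0$ elsewhere. A subtensor of $\mathscr X\in\mathbb R^{I_1\times\cdots\times I_N}$ is a tensor $\mathscr Y\in\mathbb R^{J_1\times\cdots\times J_N}$ with $y_{j_1\cdots j_N}=x_{i_{1j_1}\cdots i_{Nj_N}}$ for some indices $1\le i_{n1}<\cdots<i_{nJ_n}\le I_n$. A submatrix of $\mathscr X$ means a subtensor with $J_n=1$ for all but at most two modes, viewed as a vector or matrix (a vector having rank $1$ if nonzero, $0$ otherwise). For $\pi\in S_N$ (the symmetric group on $\{1,\dots,N\}$), the mode-permutation of $\mathscr X$ is the tensor $\mathscr Y$ with $y_{i_1\cdots i_N}=x_{i_{\pi(1)}\cdots i_{\pi(N)}}$ (with correspondingly permuted dimensions). The relation $\sim$ is the smallest equivalence relation on $\mathcal T$ with $\mathscr X\sim\alpha\mathscr X$ for all $\alpha\in\mathbb R\setminus\{0\}$ and $\mathscr X\sim\mathscr Y$ whenever $\mathscr Y$ is a mode-permutation of $\mathscr X$. A QZC rank function is a function $s:\mathcal T\to\mathbb N\cup\{0\}$ such that: (QZC1) $s(\mathscr X)=0$ iff $\mathscr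 X=\mathbf 0$, and $s(\mathscr X)=1$ iff $\mathscr X$ is rank-one; (QZC2) $s(\mathscr I_{M,N})=M$ whenever $N\ge2$; (QZC3) if $\mathscr X\in\mathbb R^{I_1\times I_2\times1\times\cdots\times1}$ then $s(\mathscr X)$ equals the rank of the corresponding $I_1\times I_2$ matrix; (QZC4) $s(\alpha\mathscr X)=s(\mathscr X)$ for $\alpha\ne0$; (QZC5) $s$ is invariant under mode-permutations; (QZC6) $s(\mathscr Y)\le s(\mathscr X)$ whenever $\mathscr Y$ is a subtensor of $\mathscr X$. *)

theory Defs
  imports "Jordan_Normal_Form.DL_Rank" "HOL-Combinatorics.Permutations"
begin

text \<open>A real tensor of order N with dimensions I_1,...,I_N is represented by the pair
  (dims, entries) with dims a list of length N of positive sizes and entries a function on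
  index lists; indices are 0-based and entries outside the index box are 0.\<close>

type_synonym tensor = "nat list \<times> (nat list \<Rightarrow> real)"

definition tdims :: "tensor \<Rightarrow> nat list" where "tdims X = fst X"
definition tent :: "tensor \<Rightarrow> nat list \<Rightarrow> real" where "tent X = snd X"
definition order :: "tensor \<Rightarrow> nat" where "order X = length (tdims X)"

definition valid_index :: "nat list \<Rightarrow> nat list \<Rightarrow> bool" where
  "valid_index d i \<longleftrightarrow> length i = length d \<and> (\<forall>n<length d. i ! n < d ! n)"

definition is_tensor :: "tensor \<Rightarrow> bool" where
  "is_tensor X \<longleftrightarrow> tdims X \<noteq> [] \<and> (\<forall>n<length (tdims X). 0 < tdims X ! n)
     \<and> (\<forall>i. \<not> valid_index (tdims X) i \<longrightarrow> tent X i = 0)"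

definition is_zero :: "tensor \<Rightarrow> bool" where
  "is_zero X \<longleftrightarrow> (\<forall>i. tent X i = 0)"

definition rank_one :: "tensor \<Rightarrow> bool" where
  "rank_one X \<longleftrightarrow> (\<exists>a :: nat \<Rightarrow> nat \<Rightarrow> real.
     (\<forall>n<order X. \<exists>j<tdims X ! n. a n j \<noteq> 0) \<and>
     (\<forall>i. valid_index (tdims X) i \<longrightarrow> tent X i = (\<Prod>n<order X. a n (i ! n))))"

definition ident_tensor :: "nat \<Rightarrow> nat \<Rightarrow> tensor" where
  "ident_tensor M N = (replicate N M,
     (\<lambda>i. if valid_index (replicate N M) i \<and> (\<forall>n<N. i ! n = i ! 0) then 1 else 0))"

definition scale_tensor :: "real \<Rightarrow> tensor \<Rightarrow> tensor" where
  "scale_tensor \<alpha> X = (tdims X, (\<lambda>i. \<alpha> * tent X i))"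

definition subtensor :: "tensor \<Rightarrow> tensor \<Rightarrow> bool" where
  "subtensor Y X \<longleftrightarrow> is_tensor Y \<and> is_tensor X \<and> order Y = order X \<and>
     (\<exists>\<sigma> :: nat \<Rightarrow> nat \<Rightarrow> nat.
        (\<forall>n<order X. strict_mono_on {..<tdims Y ! n} (\<sigma> n) \<and>
                      (\<forall>j<tdims Y ! n. \<sigma> n j < tdims X ! n)) \<and>
        (\<forall>j. valid_index (tdims Y) j \<longrightarrow>
              tent Y j = tent X (map (\<lambda>n. \<sigma> n (j ! n)) [0..<order X])))"

definition mode_perm :: "tensor \<Rightarrow> tensor \<Rightarrow> bool" where
  "mode_perm X Y \<longleftrightarrow> is_tensor X \<and> is_tensor Y \<and> order Y = order X \<and>
     (\<exists>\<pi>. \<pi> permutes {..<order X} \<and>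
        (\<forall>k<order X. tdims Y ! (\<pi> k) = tdims X ! k) \<and>
        (\<forall>i. valid_index (tdims Y) i \<longrightarrow>
              tent Y i = tent X (map (\<lambda>k. i ! (\<pi> k)) [0..<order X])))"

definition sim_gen :: "tensor \<Rightarrow> tensor \<Rightarrow> bool" where
  "sim_gen X Y \<longleftrightarrow> is_tensor X \<and>
     ((\<exists>\<alpha>. \<alpha> \<noteq> 0 \<and> Y = scale_tensor \<alpha> X) \<or> mode_perm X Y)"

definition tsim :: "tensor \<Rightarrow> tensor \<Rightarrow> bool" where
  "tsim = equivclp sim_gen"

definition mode_matrix :: "tensor \<Rightarrow> nat \<Rightarrow> nat \<Rightarrow> real mat" where
  "mode_matrix X p q = mat (tdims X ! p) (tdims X ! q)
     (\<lambda>(a, b). tent X (map (\<lambda>n. if n = p then a else if n = q then b else 0) [0..<order X]))"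

definition mat_rank :: "real mat \<Rightarrow> nat" where
  "mat_rank A = vec_space.rank (dim_row A) A"

definition submatrix_ranks :: "tensor \<Rightarrow> nat set" where
  "submatrix_ranks X =
     {k. \<exists>Z p q. subtensor Z X \<and> p < q \<and> q < order X \<and>
          (\<forall>n<order X. n \<noteq> p \<and> n \<noteq> q \<longrightarrow> tdims Z ! n = 1) \<and>
          k = mat_rank (mode_matrix Z p q)}
   \<union> {k. \<exists>Z p. subtensor Z X \<and> p < order X \<and>
          (\<forall>n<order X. n \<noteq> p \<longrightarrow> tdims Z ! n = 1) \<and>
          k = (if is_zero Z then 0 else 1)}"

definition QZC :: "(tensor \<Rightarrow> nat) \<Rightarrow> bool" where
  "QZC s \<longleftrightarrow>
     (\<forall>X. is_tensor X \<longrightarrow> (s X = 0 \<longleftrightarrow> is_zero X) \<and> (s X = 1 \<longleftrightarrow> rank_one X)) \<and>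
     (\<forall>M N. 1 \<le> M \<longrightarrow> 2 \<le> N \<longrightarrow> s (ident_tensor M N) = M) \<and>
     (\<forall>X. is_tensor X \<longrightarrow> 2 \<le> order X \<longrightarrow> (\<forall>n. 2 \<le> n \<and> n < order X \<longrightarrow> tdims X ! n = 1) \<longrightarrow>
          s X = mat_rank (mode_matrix X 0 1)) \<and>
     (\<forall>X \<alpha>. is_tensor X \<longrightarrow> \<alpha> \<noteq> 0 \<longrightarrow> s (scale_tensor \<alpha> X) = s X) \<and>
     (\<forall>X Y. mode_perm X Y \<longrightarrow> s Y = s X) \<and>
     (\<forall>X Y. subtensor Y X \<longrightarrow> s Y \<le> s X)"

definition mu :: "tensor \<Rightarrow> nat" where
  "mu X = Inf {s X | s. QZC s}"

end

theory Submission
  imports Defs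
begin

context vec_space begin

lemma rank_mult_le_inner:
  assumes B: "B \<in> carrier_mat n k" and C: "C \<in> carrier_mat k m"
  shows "rank (B * C) \<le> k"
proof -
  have BC: "B * C \<in> carrier_mat n m" using B C by auto
  have sub0: "set (cols (B * C)) \<subseteq> span (set (cols B))"
  proof
    fix x assume "x \<in> set (cols (B * C))"
    then obtain j where j: "j < m" "x = col (B * C) j"
      using BC by (metis cols_length cols_nth in_set_conv_nth carrier_matD(2))
    have "x = B *\<^sub>v col C j" using j B C by auto
    moreover have "col C j \<in> carrier_vec (dim_col B)" using B C j by auto
    ultimately have "x \<in> col_space B" using col_space_eq[OF B] B by auto
    then show "x \<in> span (set (cols B))" unfolding col_space_def .
  qed
  have sB: "subspace class_ring (span (set (cols B))) V"
    using B cols_dim carrier_matD(1) span_is_subspace by (metis module_vec_simps(3))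
  have sBC: "subspace class_ring (span (set (cols (B*C)))) V"
    using BC cols_dim carrier_matD(1) span_is_subspace by (metis module_vec_simps(3))
  have "span (set (cols (B * C))) \<subseteq> span (set (cols B))"
    using sub0 B by (intro span_subsetI) (auto simp: carrier_matD(1) cols_dim[of B, unfolded carrier_matD(1)[OF B]] dest: subsetD[OF cols_dim])
  then have subspace: "subspace class_ring (span (set (cols (B*C)))) (vs (span (set (cols B))))"
    using nested_subspaces[OF sB sBC] by auto
  have fB: "vectorspace.fin_dim class_ring (vs (span (set (cols B))))"
    using fin_dim_span_cols[OF B] .
  have fBC: "vectorspace.fin_dim class_ring (span_vs (set (cols (B * C))))"
    using fin_dim_span_cols[OF BC] .
  have "rank (B * C) \<le> rank B" unfolding rank_def
    using vectorspace.subspace_dim[OF subspace_is_vs[OF sB] subspace fB] fBC by auto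
  also have "\<dots> \<le> k" using rank_le_nc[OF B] .
  finally show ?thesis .
qed

lemma rank_factor:
  assumes A: "A \<in> carrier_mat n m"
  shows "\<exists>B C. B \<in> carrier_mat n (rank A) \<and> C \<in> carrier_mat (rank A) m \<and> A = B * C"
proof -
  obtain S where S: "maximal S (\<lambda>T. T \<subseteq> set (cols A) \<and> lin_indpt T)"
    using maximal_exists[of "(\<lambda>T. T \<subseteq> set (cols A) \<and> lin_indpt T)" "card (set (cols A))" "{}"]
    by (meson List.finite_set card_mono empty_iff empty_subsetI finite_lin_indpt2 rev_finite_subset)
  have rk: "rank A = card S" using rank_card_indpt[OF A S] .
  have Ssub: "S \<subseteq> set (cols A)" and Sli: "lin_indpt S" using S unfolding maximal_def by auto
  have colsC: "set (cols A) \<subseteq> carrier_vec n" using A cols_dim by blast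
  have SC: "S \<subseteq> carrier_vec n" using Ssub colsC by auto
  have finS: "finite S" using Ssub finite_subset by blast
  have inspan: "c \<in> span S" if c: "c \<in> set (cols A)" for c
  proof (cases "c \<in> S")
    case True then show ?thesis using in_own_span[OF SC] by auto
  next
    case False
    have "\<not> lin_indpt (S \<union> {c})"
    proof
      assume "lin_indpt (S \<union> {c})"
      then have "S \<union> {c} = S" using S c Ssub unfolding maximal_def by (metis Un_least Un_upper1 empty_subsetI insert_subset)
      then show False using False by auto
    qed
    then show ?thesis using lin_dep_iff_in_span[OF SC Sli _ False] c colsC by auto
  qed
  obtain ws where ws: "set ws = S" "distinct ws" using finite_distinct_list[OF finS] by blast
  have lws: "length ws = card S" using ws distinct_card by fastforce
  define B where "B = mat_of_cols n ws"
  have B: "B \<in> carrier_mat n (card S)" unfolding B_def using lws by (metis mat_of_cols_carrier(1))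
  have wsC: "set ws \<subseteq> carrier_vec n" using ws SC by auto
  have csB: "col_space B = span S" unfolding col_space_def B_def using cols_mat_of_cols[OF wsC] ws by simp
  have "\<forall>j<m. \<exists>x. x \<in> carrier_vec (card S) \<and> col A j = B *\<^sub>v x"
  proof (intro allI impI)
    fix j assume j: "j < m"
    have "col A j \<in> set (cols A)" using j A by (metis cols_length cols_nth nth_mem carrier_matD(2))
    then have "col A j \<in> col_space B" using inspan csB by auto
    then show "\<exists>x. x \<in> carrier_vec (card S) \<and> col A j = B *\<^sub>v x"
      using col_space_eq[OF B] B by auto
  qed
  then obtain x where x: "\<And>j. j < m \<Longrightarrow> x j \<in> carrier_vec (card S) \<and> col A j = B *\<^sub>v x j"
    by metis
  define C where "C = mat_of_cols (card S) (map x [0..<m])"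
  have C: "C \<in> carrier_mat (card S) m" unfolding C_def by (metis length_map length_upt minus_nat.diff_0 mat_of_cols_carrier(1))
  have colC: "col C j = x j" if "j < m" for j
    unfolding C_def using that x by (subst col_mat_of_cols) auto
  have "A = B * C"
  proof (rule eq_matI)
    fix i j assume i: "i < dim_row (B * C)" and j: "j < dim_col (B * C)"
    have i': "i < n" and j': "j < m" using i j B C by auto
    have "(B * C) $$ (i, j) = row B i \<bullet> col C j" using i j by auto
    also have "\<dots> = (B *\<^sub>v x j) $ i" using colC[OF j'] i' B by auto
    also have "\<dots> = col A j $ i" using x[OF j'] by auto
    also have "\<dots> = A $$ (i, j)" using A i' j' by auto
    finally show "A $$ (i, j) = (B * C) $$ (i, j)" by simp
  qed (use A B C in auto)
  then show ?thesis using B C rk by auto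
qed

end

lemma mat_rank_le_inner:
  fixes B C :: "real mat"
  assumes B: "B \<in> carrier_mat n k" and C: "C \<in> carrier_mat k m"
  shows "mat_rank (B * C) \<le> k"
  unfolding mat_rank_def using vec_space.rank_mult_le_inner[OF B C] B by auto

lemma mat_rank_factor:
  fixes A :: "real mat"
  assumes A: "A \<in> carrier_mat n m"
  shows "\<exists>B C. B \<in> carrier_mat n (mat_rank A) \<and> C \<in> carrier_mat (mat_rank A) m \<and> A = B * C"
  unfolding mat_rank_def using vec_space.rank_factor[OF A] A by auto


lemma mult_entry:
  fixes B C :: "real mat"
  assumes B: "B \<in> carrier_mat n k" and C: "C \<in> carrier_mat k m" and i: "i < n" and j: "j < m"
  shows "(B * C) $$ (i, j) = (\<Sum>l<k. B $$ (i, l) * C $$ (l, j))"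
  using B C i j by (simp add: scalar_prod_def lessThan_atLeast0)

lemma mat_rank_reindex:
  fixes A :: "real mat"
  assumes A: "A \<in> carrier_mat n m"
    and f: "\<And>x. x < r \<Longrightarrow> f x < n" and g: "\<And>y. y < c \<Longrightarrow> g y < m"
  shows "mat_rank (mat r c (\<lambda>(x, y). A $$ (f x, g y))) \<le> mat_rank A"
proof -
  obtain B C where B: "B \<in> carrier_mat n (mat_rank A)" and C: "C \<in> carrier_mat (mat_rank A) m"
    and AB: "A = B * C" using mat_rank_factor[OF A] by blast
  define B' where "B' = mat r (mat_rank A) (\<lambda>(x, l). B $$ (f x, l))"
  define C' where "C' = mat (mat_rank A) c (\<lambda>(l, y). C $$ (l, g y))"
  have B': "B' \<in> carrier_mat r (mat_rank A)" and C': "C' \<in> carrier_mat (mat_rank A) c"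
    unfolding B'_def C'_def by auto
  have "mat r c (\<lambda>(x, y). A $$ (f x, g y)) = B' * C'"
  proof (rule eq_matI)
    fix i j assume i: "i < dim_row (B' * C')" and j: "j < dim_col (B' * C')"
    have i': "i < r" and j': "j < c" using i j B' C' by auto
    have "(B' * C') $$ (i, j) = (\<Sum>l<mat_rank A. B' $$ (i, l) * C' $$ (l, j))"
      using mult_entry[OF B' C' i' j'] .
    also have "\<dots> = (\<Sum>l<mat_rank A. B $$ (f i, l) * C $$ (l, g j))"
      unfolding B'_def C'_def using i' j' by simp
    also have "\<dots> = A $$ (f i, g j)" using mult_entry[OF B C f[OF i'] g[OF j']] by (simp add: AB[symmetric])
    finally show "mat r c (\<lambda>(x, y). A $$ (f x, g y)) $$ (i, j) = (B' * C') $$ (i, j)"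
      using i' j' by simp
  qed (use B' C' in auto)
  then show ?thesis using mat_rank_le_inner[OF B' C'] by simp
qed

lemma mat_rank_transpose_le:
  fixes A :: "real mat"
  assumes A: "A \<in> carrier_mat n m"
  shows "mat_rank (transpose_mat A) \<le> mat_rank A"
proof -
  obtain B C where B: "B \<in> carrier_mat n (mat_rank A)" and C: "C \<in> carrier_mat (mat_rank A) m"
    and AB: "A = B * C" using mat_rank_factor[OF A] by blast
  have "transpose_mat A = transpose_mat C * transpose_mat B" unfolding AB using transpose_mult[OF B C] .
  then show ?thesis using mat_rank_le_inner[of "transpose_mat C" m "mat_rank A" "transpose_mat B" n] B C by auto
qed

lemma mat_rank_transpose:
  fixes A :: "real mat"
  shows "mat_rank (transpose_mat A) = mat_rank A"
proof -
  have A: "A \<in> carrier_mat (dim_row A) (dim_col A)" by auto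
  have "mat_rank (transpose_mat (transpose_mat A)) \<le> mat_rank (transpose_mat A)"
    by (rule mat_rank_transpose_le) auto
  then show ?thesis using mat_rank_transpose_le[OF A] by simp
qed

lemma mat_rank_le_row:
  fixes A :: "real mat"
  shows "mat_rank A \<le> dim_row A"
proof -
  have "A = 1\<^sub>m (dim_row A) * A" by simp
  then show ?thesis using mat_rank_le_inner[of "1\<^sub>m (dim_row A)" "dim_row A" "dim_row A" A "dim_col A"]
    by (metis carrier_mat_triv one_carrier_mat)
qed

lemma mat_rank_le_col:
  fixes A :: "real mat"
  shows "mat_rank A \<le> dim_col A"
  using mat_rank_le_row[of "transpose_mat A"] mat_rank_transpose[of A] by simp

lemma mat_rank_smult_le:
  fixes A :: "real mat"
  shows "mat_rank (a \<cdot>\<^sub>m A) \<le> mat_rank A"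
proof -
  have A: "A \<in> carrier_mat (dim_row A) (dim_col A)" by auto
  obtain B C where B: "B \<in> carrier_mat (dim_row A) (mat_rank A)" and C: "C \<in> carrier_mat (mat_rank A) (dim_col A)"
    and AB: "A = B * C" using mat_rank_factor[OF A] by blast
  have "a \<cdot>\<^sub>m A = (a \<cdot>\<^sub>m B) * C" unfolding AB using B C by (simp add: mult_smult_assoc_mat)
  then show ?thesis using mat_rank_le_inner[of "a \<cdot>\<^sub>m B" "dim_row A" "mat_rank A" C "dim_col A"] B C by auto
qed

lemma mat_rank_smult:
  fixes A :: "real mat"
  assumes "a \<noteq> 0"
  shows "mat_rank (a \<cdot>\<^sub>m A) = mat_rank A"
proof -
  have "(1 / a) \<cdot>\<^sub>m (a \<cdot>\<^sub>m A) = A" using assms by (intro eq_matI) auto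
  then show ?thesis using mat_rank_smult_le[of a A] mat_rank_smult_le[of "1/a" "a \<cdot>\<^sub>m A"] by simp
qed

lemma mat_rank_one:
  "mat_rank (1\<^sub>m M :: real mat) = M"
  unfolding mat_rank_def using vec_space.det_rank_iff[of "1\<^sub>m M :: real mat" M] by simp

lemma mat_rank_0_imp:
  fixes A :: "real mat"
  assumes "mat_rank A = 0" "i < dim_row A" "j < dim_col A"
  shows "A $$ (i, j) = 0"
proof -
  have A: "A \<in> carrier_mat (dim_row A) (dim_col A)" by auto
  obtain B C where B: "B \<in> carrier_mat (dim_row A) (mat_rank A)" and C: "C \<in> carrier_mat (mat_rank A) (dim_col A)"
    and AB: "A = B * C" using mat_rank_factor[OF A] by blast
  show ?thesis using mult_entry[OF B C assms(2,3)] AB assms(1) by simp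
qed

lemma mat_rank_le1_imp:
  fixes A :: "real mat"
  assumes "mat_rank A \<le> 1"
  shows "\<exists>f g. \<forall>i j. i < dim_row A \<longrightarrow> j < dim_col A \<longrightarrow> A $$ (i, j) = f i * g j"
proof -
  have A: "A \<in> carrier_mat (dim_row A) (dim_col A)" by auto
  obtain B C where B: "B \<in> carrier_mat (dim_row A) (mat_rank A)" and C: "C \<in> carrier_mat (mat_rank A) (dim_col A)"
    and AB: "A = B * C" using mat_rank_factor[OF A] by blast
  show ?thesis
  proof (cases "mat_rank A = 0")
    case True
    then show ?thesis using mat_rank_0_imp by (intro exI[of _ "\<lambda>_. 0"]) auto
  next
    case False
    then have r1: "mat_rank A = 1" using assms by auto
    show ?thesis
    proof (intro exI allI impI)
      fix i j assume i: "i < dim_row A" and j: "j < dim_col A"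
      show "A $$ (i, j) = B $$ (i, 0) * C $$ (0, j)"
        using mult_entry[OF B C i j] AB r1 by simp
    qed
  qed
qed

lemma mat_rank_product_le1:
  fixes f g :: "nat \<Rightarrow> real"
  shows "mat_rank (mat n m (\<lambda>(i, j). f i * g j)) \<le> 1"
proof -
  define B :: "real mat" where "B = mat n 1 (\<lambda>(i, l). f i)"
  define C :: "real mat" where "C = mat 1 m (\<lambda>(l, j). g j)"
  have B: "B \<in> carrier_mat n 1" and C: "C \<in> carrier_mat 1 m" unfolding B_def C_def by auto
  have "mat n m (\<lambda>(i, j). f i * g j) = B * C"
    by (rule eq_matI) (use B C in \<open>auto simp: B_def C_def scalar_prod_def\<close>)
  then show ?thesis using mat_rank_le_inner[OF B C] by simp
qed

lemma tdims_pair[simp]: "tdims (d, f) = d" and tent_pair[simp]: "tent (d, f) = f"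
  by (simp_all add: tdims_def tent_def)

lemma tensor_eqI: "tdims X = tdims Y \<Longrightarrow> tent X = tent Y \<Longrightarrow> X = Y"
  by (simp add: tdims_def tent_def prod_eq_iff)

lemma scale_simps[simp]:
  "tdims (scale_tensor c X) = tdims X" "tent (scale_tensor c X) i = c * tent X i"
  "order (scale_tensor c X) = order X"
  by (simp_all add: scale_tensor_def order_def)

lemma is_tensor_scale: "is_tensor X \<Longrightarrow> is_tensor (scale_tensor c X)"
  by (simp add: is_tensor_def)

lemma scale_inv: "c \<noteq> 0 \<Longrightarrow> scale_tensor (1 / c) (scale_tensor c X) = X"
  by (rule tensor_eqI) auto

lemma valid_index_map:
  "valid_index d (map f [0..<length d]) \<longleftrightarrow> (\<forall>n<length d. f n < d ! n)"
  by (simp add: valid_index_def)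

abbreviation ipm :: "(nat \<Rightarrow> nat) \<Rightarrow> nat \<Rightarrow> nat" where "ipm \<pi> \<equiv> inv_into UNIV \<pi>"

definition pdims :: "(nat \<Rightarrow> nat) \<Rightarrow> tensor \<Rightarrow> nat list" where
  "pdims \<pi> X = map (\<lambda>m. tdims X ! ipm \<pi> m) [0..<order X]"

definition permT :: "(nat \<Rightarrow> nat) \<Rightarrow> tensor \<Rightarrow> tensor" where
  "permT \<pi> X = (pdims \<pi> X, \<lambda>i. if valid_index (pdims \<pi> X) i
      then tent X (map (\<lambda>k. i ! \<pi> k) [0..<order X]) else 0)"

lemma permT_simps:
  "tdims (permT \<pi> X) = pdims \<pi> X"
  "tent (permT \<pi> X) i = (if valid_index (pdims \<pi> X) i then tent X (map (\<lambda>k. i ! \<pi> k) [0..<order X]) else 0)"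
  "order (permT \<pi> X) = order X"
  "length (pdims \<pi> X) = order X"
  by (simp_all add: permT_def order_def pdims_def)

lemma pdims_nth: "m < order X \<Longrightarrow> pdims \<pi> X ! m = tdims X ! ipm \<pi> m"
  by (simp add: pdims_def)

lemma perm_facts:
  assumes "\<pi> permutes {..<N}"
  shows "\<And>m. m < N \<Longrightarrow> ipm \<pi> m < N" "\<And>m. m < N \<Longrightarrow> \<pi> m < N"
    "\<And>m. \<pi> (ipm \<pi> m) = m" "\<And>m. ipm \<pi> (\<pi> m) = m" "ipm \<pi> permutes {..<N}"
    "ipm (ipm \<pi>) = \<pi>" "\<And>a b. \<pi> a = \<pi> b \<longleftrightarrow> a = b"
proof -
  show ip: "ipm \<pi> permutes {..<N}" using permutes_inv[OF assms] .
  show "\<And>m. m < N \<Longrightarrow> ipm \<pi> m < N" using permutes_in_image[OF ip] by auto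
  show "\<And>m. m < N \<Longrightarrow> \<pi> m < N" using permutes_in_image[OF assms] by auto
  show "\<And>m. \<pi> (ipm \<pi> m) = m" "\<And>m. ipm \<pi> (\<pi> m) = m" using permutes_inverses[OF assms] by auto
  show "ipm (ipm \<pi>) = \<pi>" using permutes_inv_inv[OF assms] .
  show "\<And>a b. \<pi> a = \<pi> b \<longleftrightarrow> a = b" using permutes_inj[OF assms] by (auto dest: injD)
qed

definition mode_perm_by :: "(nat \<Rightarrow> nat) \<Rightarrow> tensor \<Rightarrow> tensor \<Rightarrow> bool" where
  "mode_perm_by \<pi> X Y \<longleftrightarrow> \<pi> permutes {..<order X} \<and>
        (\<forall>k<order X. tdims Y ! (\<pi> k) = tdims X ! k) \<and>
        (\<forall>i. valid_index (tdims Y) i \<longrightarrow>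
              tent Y i = tent X (map (\<lambda>k. i ! (\<pi> k)) [0..<order X]))"

lemma mode_perm_iff: "mode_perm X Y \<longleftrightarrow> is_tensor X \<and> is_tensor Y \<and> order Y = order X \<and> (\<exists>\<pi>. mode_perm_by \<pi> X Y)"
  unfolding mode_perm_def mode_perm_by_def by blast

lemma mp_dims:
  assumes "mode_perm_by \<pi> X Y" "m < order X"
  shows "tdims Y ! m = tdims X ! ipm \<pi> m"
proof -
  have p: "\<pi> permutes {..<order X}" using assms unfolding mode_perm_by_def by auto
  have k: "ipm \<pi> m < order X" using perm_facts(1)[OF p assms(2)] .
  have "tdims Y ! (\<pi> (ipm \<pi> m)) = tdims X ! ipm \<pi> m"
    using assms(1) k unfolding mode_perm_by_def by blast
  then show ?thesis using perm_facts(3)[OF p] by simp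
qed

lemma permT_tensor:
  assumes X: "is_tensor X" and p: "\<pi> permutes {..<order X}"
  shows "is_tensor (permT \<pi> X)" "mode_perm_by \<pi> X (permT \<pi> X)" "mode_perm X (permT \<pi> X)"
proof -
  note pf = perm_facts[OF p]
  have o: "order X > 0" using X unfolding is_tensor_def order_def by auto
  show t: "is_tensor (permT \<pi> X)"
    unfolding is_tensor_def permT_simps using X o pf(1)
    by (auto simp: pdims_nth is_tensor_def order_def[symmetric] permT_simps(4)[unfolded order_def] pdims_def)
  show mb: "mode_perm_by \<pi> X (permT \<pi> X)"
    unfolding mode_perm_by_def using p pf by (auto simp: permT_simps pdims_nth)
  show "mode_perm X (permT \<pi> X)" using X t mb mode_perm_iff permT_simps(3) by blast
qed

lemma mp_eq:
  assumes Y: "is_tensor Y" and o: "order Y = order X" and mb: "mode_perm_by \<pi> X Y"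
  shows "Y = permT \<pi> X"
proof (rule tensor_eqI)
  have p: "\<pi> permutes {..<order X}" using mb unfolding mode_perm_by_def by auto
  show d: "tdims Y = tdims (permT \<pi> X)"
    by (rule nth_equalityI) (use o in \<open>auto simp: permT_simps pdims_nth mp_dims[OF mb] order_def\<close>)
  show "tent Y = tent (permT \<pi> X)"
  proof
    fix i show "tent Y i = tent (permT \<pi> X) i"
      using mb Y d unfolding mode_perm_by_def is_tensor_def by (auto simp: permT_simps)
  qed
qed

lemma mp_sym:
  assumes mb: "mode_perm_by \<pi> X Y" and o: "order Y = order X"
  shows "mode_perm_by (ipm \<pi>) Y X"
proof -
  have p: "\<pi> permutes {..<order X}" using mb unfolding mode_perm_by_def by auto
  note pf = perm_facts[OF p]
  have ent: "tent X i = tent Y (map (\<lambda>k. i ! ipm \<pi> k) [0..<order Y])"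
    if v: "valid_index (tdims X) i" for i
  proof -
    let ?j = "map (\<lambda>k. i ! ipm \<pi> k) [0..<order Y]"
    have vj: "valid_index (tdims Y) ?j"
      using v o pf(1) mp_dims[OF mb] unfolding valid_index_def order_def by auto
    have "tent Y ?j = tent X (map (\<lambda>k. ?j ! \<pi> k) [0..<order X])"
      using mb vj unfolding mode_perm_by_def by auto
    also have "map (\<lambda>k. ?j ! \<pi> k) [0..<order X] = i"
      using v o pf(2,4) unfolding valid_index_def order_def by (intro nth_equalityI) auto
    finally show ?thesis by simp
  qed
  show ?thesis unfolding mode_perm_by_def
    using pf o ent mp_dims[OF mb] by auto
qed

lemma mode_perm_sym:
  assumes "mode_perm X Y" shows "mode_perm Y X"
proof -
  from assms obtain \<pi> where h: "is_tensor X" "is_tensor Y" "order Y = order X" "mode_perm_by \<pi> X Y"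
    unfolding mode_perm_iff by blast
  then have "mode_perm_by (ipm \<pi>) Y X" using mp_sym by blast
  then show ?thesis unfolding mode_perm_iff using h by auto
qed

lemma sim_gen_tensor: "sim_gen X Y \<Longrightarrow> is_tensor X \<and> is_tensor Y"
  unfolding sim_gen_def mode_perm_def by (auto intro: is_tensor_scale)

lemma sim_gen_sym: "sim_gen X Y \<Longrightarrow> sim_gen Y X"
proof -
  assume s: "sim_gen X Y"
  then have t: "is_tensor Y" using sim_gen_tensor by blast
  from s consider (a) c where "c \<noteq> 0" "Y = scale_tensor c X" | (b) "mode_perm X Y"
    unfolding sim_gen_def by blast
  then show "sim_gen Y X"
  proof cases
    case a
    then have "X = scale_tensor (1 / c) Y" using scale_inv[of c X] by simp
    moreover have "1 / c \<noteq> 0" using a by simp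
    ultimately show ?thesis using t unfolding sim_gen_def by blast
  next
    case b then show ?thesis using t mode_perm_sym unfolding sim_gen_def by blast
  qed
qed

lemma tsim_induct_aux:
  assumes "tsim X Y" "is_tensor X" "P X"
    "\<And>A B. is_tensor A \<Longrightarrow> P A \<Longrightarrow> sim_gen A B \<Longrightarrow> P B"
  shows "is_tensor Y \<and> P Y"
proof -
  have "equivclp sim_gen X Y" using assms(1) unfolding tsim_def .
  then show ?thesis
  proof (induction rule: equivclp_induct)
    case base then show ?case using assms(2,3) by simp
  next
    case (step y z)
    have g: "sim_gen y z" using step(2) sim_gen_sym by (elim disjE) auto
    have "is_tensor z" using sim_gen_tensor[OF g] by simp
    moreover have "P z" using assms(4)[of y z] step(3) g by simp
    ultimately show ?case by simp
  qed
qed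

lemma tsim_tensor: "tsim X Y \<Longrightarrow> is_tensor X \<Longrightarrow> is_tensor Y"
  using tsim_induct_aux[of X Y "\<lambda>_. True"] by simp

lemma tsim_induct:
  assumes "tsim X Y" "is_tensor X" "P X"
    "\<And>A B. is_tensor A \<Longrightarrow> P A \<Longrightarrow> sim_gen A B \<Longrightarrow> P B"
  shows "P Y"
  using tsim_induct_aux[of X Y P, OF assms] by simp

lemma tsim_refl: "tsim X X" unfolding tsim_def by simp

lemma tsim_step: "tsim X Y \<Longrightarrow> sim_gen Y Z \<Longrightarrow> tsim X Z"
  unfolding tsim_def by (rule equivclp_into_equivclp) (assumption, rule disjI1)

lemma sim_gen_order: "sim_gen A B \<Longrightarrow> order B = order A"
  unfolding sim_gen_def mode_perm_def by auto

lemma tsim_order: "tsim X Y \<Longrightarrow> is_tensor X \<Longrightarrow> order Y = order X"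
  by (rule tsim_induct[of X Y "\<lambda>Y. order Y = order X"]) (auto dest: sim_gen_order)

definition sub_by :: "(nat \<Rightarrow> nat \<Rightarrow> nat) \<Rightarrow> tensor \<Rightarrow> tensor \<Rightarrow> bool" where
  "sub_by \<sigma> Y X \<longleftrightarrow> (\<forall>n<order X. strict_mono_on {..<tdims Y ! n} (\<sigma> n) \<and>
                      (\<forall>j<tdims Y ! n. \<sigma> n j < tdims X ! n)) \<and>
        (\<forall>j. valid_index (tdims Y) j \<longrightarrow>
              tent Y j = tent X (map (\<lambda>n. \<sigma> n (j ! n)) [0..<order X]))"

lemma subtensor_iff: "subtensor Y X \<longleftrightarrow> is_tensor Y \<and> is_tensor X \<and> order Y = order X \<and> (\<exists>\<sigma>. sub_by \<sigma> Y X)"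
  unfolding subtensor_def sub_by_def by blast

lemma valid_len: "valid_index d i \<Longrightarrow> length i = length d"
  by (simp add: valid_index_def)

lemma map_nth_valid: "valid_index (tdims X) i \<Longrightarrow> map (\<lambda>n. i ! n) [0..<order X] = i"
  unfolding valid_index_def order_def by (intro nth_equalityI) auto

lemma sub_refl: "is_tensor X \<Longrightarrow> subtensor X X"
  unfolding subtensor_iff sub_by_def
  by (intro conjI exI[of _ "\<lambda>n j. j"]) (auto simp: strict_mono_on_def map_nth_valid)

lemma strict_mono_bound:
  fixes f :: "nat \<Rightarrow> nat"
  assumes "strict_mono_on {..<d} f" "\<And>j. j < d \<Longrightarrow> f j < D"
  shows "d \<le> D"
proof -
  have "inj_on f {..<d}" using strict_mono_on_imp_inj_on[OF assms(1)] .
  moreover have "f ` {..<d} \<subseteq> {..<D}" using assms(2) by auto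
  ultimately show ?thesis using card_inj_on_le[of f "{..<d}" "{..<D}"] by simp
qed

lemma sub_dims_le:
  assumes "subtensor Z Y" "n < order Y"
  shows "tdims Z ! n \<le> tdims Y ! n"
proof -
  obtain \<sigma> where "sub_by \<sigma> Z Y" using assms unfolding subtensor_iff by blast
  then show ?thesis using assms(2) strict_mono_bound unfolding sub_by_def by blast
qed

lemma sub_trans:
  assumes ZY: "subtensor Z Y" and YX: "subtensor Y X"
  shows "subtensor Z X"
proof -
  obtain s1 where s1: "sub_by s1 Z Y" and o1: "order Z = order Y" and tZ: "is_tensor Z"
    using ZY unfolding subtensor_iff by blast
  obtain s2 where s2: "sub_by s2 Y X" and o2: "order Y = order X" and tX: "is_tensor X"
    using YX unfolding subtensor_iff by blast
  define s where "s = (\<lambda>n j. s2 n (s1 n j))"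
  have "sub_by s Z X" unfolding sub_by_def
  proof (intro conjI allI impI)
    fix n assume n: "n < order X"
    have m1: "strict_mono_on {..<tdims Z ! n} (s1 n)" "\<forall>j<tdims Z ! n. s1 n j < tdims Y ! n"
      using s1 n o2 unfolding sub_by_def by auto
    have m2: "strict_mono_on {..<tdims Y ! n} (s2 n)" "\<forall>j<tdims Y ! n. s2 n j < tdims X ! n"
      using s2 n unfolding sub_by_def by auto
    show "strict_mono_on {..<tdims Z ! n} (s n)" unfolding s_def
      using m1 m2 by (auto simp: strict_mono_on_def)
  next
    fix n j assume n: "n < order X" and j: "j < tdims Z ! n"
    have m1: "\<forall>j<tdims Z ! n. s1 n j < tdims Y ! n"
      using s1 n o2 unfolding sub_by_def by auto
    have m2: "\<forall>j<tdims Y ! n. s2 n j < tdims X ! n"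
      using s2 n unfolding sub_by_def by auto
    show "s n j < tdims X ! n" unfolding s_def using m1 m2 j by auto
  next
    fix j assume v: "valid_index (tdims Z) j"
    let ?j = "map (\<lambda>n. s1 n (j ! n)) [0..<order Y]"
    have vj: "valid_index (tdims Y) ?j"
      using v s1 o1 unfolding valid_index_def sub_by_def order_def by auto
    have "tent Z j = tent Y ?j" using s1 v o1 unfolding sub_by_def by auto
    also have "\<dots> = tent X (map (\<lambda>n. s2 n (?j ! n)) [0..<order X])" using s2 vj unfolding sub_by_def by auto
    also have "map (\<lambda>n. s2 n (?j ! n)) [0..<order X] = map (\<lambda>n. s n (j ! n)) [0..<order X]"
      using o2 unfolding s_def by auto
    finally show "tent Z j = tent X (map (\<lambda>n. s n (j ! n)) [0..<order X])" .
  qed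
  then show ?thesis using tZ tX o1 o2 unfolding subtensor_iff by auto
qed

lemma sub_scale:
  assumes "subtensor Z Y" shows "subtensor (scale_tensor c Z) (scale_tensor c Y)"
proof -
  obtain s where s: "sub_by s Z Y" and h: "is_tensor Z" "is_tensor Y" "order Z = order Y"
    using assms unfolding subtensor_iff by blast
  have "sub_by s (scale_tensor c Z) (scale_tensor c Y)" using s unfolding sub_by_def by auto
  then show ?thesis using h is_tensor_scale unfolding subtensor_iff by auto
qed

lemma sub_perm:
  assumes ZY: "subtensor Z Y" and mb: "mode_perm_by \<pi> Y Y2" and t2: "is_tensor Y2"
    and o2: "order Y2 = order Y"
  shows "subtensor (permT \<pi> Z) Y2" "mode_perm Z (permT \<pi> Z)"
proof -
  obtain s where s: "sub_by s Z Y" and tZ: "is_tensor Z" and tY: "is_tensor Y" and o: "order Z = order Y"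
    using ZY unfolding subtensor_iff by blast
  have p: "\<pi> permutes {..<order Y}" using mb unfolding mode_perm_by_def by auto
  note pf = perm_facts[OF p]
  have pZ: "\<pi> permutes {..<order Z}" using p o by simp
  note PT = permT_tensor[OF tZ pZ]
  show "mode_perm Z (permT \<pi> Z)" using PT by simp
  define s2 where "s2 = (\<lambda>m. s (ipm \<pi> m))"
  have "sub_by s2 (permT \<pi> Z) Y2" unfolding sub_by_def
  proof (intro conjI allI impI)
    fix m assume m: "m < order Y2"
    then have m': "m < order Y" "ipm \<pi> m < order Y" using o2 pf(1) by auto
    have d: "tdims (permT \<pi> Z) ! m = tdims Z ! ipm \<pi> m"
      using m' o by (simp add: permT_simps pdims_nth)
    have d2: "tdims Y2 ! m = tdims Y ! ipm \<pi> m" using mp_dims[OF mb m'(1)] .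
    show "strict_mono_on {..<tdims (permT \<pi> Z) ! m} (s2 m)"
      using s m' d unfolding sub_by_def s2_def by auto
  next
    fix m j assume m: "m < order Y2" and j: "j < tdims (permT \<pi> Z) ! m"
    then have m': "m < order Y" "ipm \<pi> m < order Y" using o2 pf(1) by auto
    have d: "tdims (permT \<pi> Z) ! m = tdims Z ! ipm \<pi> m"
      using m' o by (simp add: permT_simps pdims_nth)
    have d2: "tdims Y2 ! m = tdims Y ! ipm \<pi> m" using mp_dims[OF mb m'(1)] .
    show "s2 m j < tdims Y2 ! m"
      using s m' d d2 j unfolding sub_by_def s2_def by auto
  next
    fix j assume v: "valid_index (tdims (permT \<pi> Z)) j"
    let ?j1 = "map (\<lambda>k. j ! \<pi> k) [0..<order Z]"
    have lj: "length j = order Z" using v by (simp add: valid_index_def permT_simps)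
    have v1: "valid_index (tdims Z) ?j1"
    proof -
      have "j ! \<pi> k < tdims Z ! k" if "k < order Z" for k
      proof -
        have "\<pi> k < order Z" using pf(2) that o by auto
        then have "j ! \<pi> k < tdims (permT \<pi> Z) ! \<pi> k" using v unfolding valid_index_def by (simp add: permT_simps)
        then show ?thesis using \<open>\<pi> k < order Z\<close> pf(4) by (simp add: permT_simps pdims_nth)
      qed
      then show ?thesis unfolding valid_index_def order_def by simp
    qed
    have "tent (permT \<pi> Z) j = tent Z ?j1" using v by (simp add: permT_simps)
    also have "\<dots> = tent Y (map (\<lambda>n. s n (?j1 ! n)) [0..<order Y])" using s v1 unfolding sub_by_def by auto
    also have "map (\<lambda>n. s n (?j1 ! n)) [0..<order Y] = map (\<lambda>k. s k (j ! \<pi> k)) [0..<order Y]"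
      using o by auto
    finally have e1: "tent (permT \<pi> Z) j = tent Y (map (\<lambda>k. s k (j ! \<pi> k)) [0..<order Y])" .
    let ?j3 = "map (\<lambda>n. s2 n (j ! n)) [0..<order Y2]"
    have v3: "valid_index (tdims Y2) ?j3"
    proof -
      have "s2 m (j ! m) < tdims Y2 ! m" if m: "m < order Y2" for m
      proof -
        have m': "m < order Y" "ipm \<pi> m < order Y" using m o2 pf(1) by auto
        have "j ! m < tdims Z ! ipm \<pi> m" using v m' o lj unfolding valid_index_def
          by (simp add: permT_simps pdims_nth)
        then show ?thesis using s m' mp_dims[OF mb m'(1)] unfolding sub_by_def s2_def by auto
      qed
      then show ?thesis unfolding valid_index_def order_def by simp
    qed
    have "tent Y2 ?j3 = tent Y (map (\<lambda>k. ?j3 ! \<pi> k) [0..<order Y])"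
      using mb v3 unfolding mode_perm_by_def by auto
    also have "map (\<lambda>k. ?j3 ! \<pi> k) [0..<order Y] = map (\<lambda>k. s k (j ! \<pi> k)) [0..<order Y]"
      using pf(2,4) o2 unfolding s2_def by auto
    finally show "tent (permT \<pi> Z) j = tent Y2 ?j3" using e1 by simp
  qed
  then show "subtensor (permT \<pi> Z) Y2" using PT t2 o o2 unfolding subtensor_iff by (auto simp: permT_simps)
qed

lemma sub_zero:
  assumes "subtensor Z Y" "is_zero Y" shows "is_zero Z"
proof -
  obtain s where s: "sub_by s Z Y" and tZ: "is_tensor Z"
    using assms unfolding subtensor_iff by blast
  show ?thesis unfolding is_zero_def
  proof
    fix j show "tent Z j = 0"
      using s tZ assms(2) unfolding sub_by_def is_zero_def is_tensor_def by metis
  qed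
qed

lemma rank_one_nz:
  assumes t: "is_tensor X" and r: "rank_one X" shows "\<not> is_zero X"
proof -
  obtain a where a: "\<forall>n<order X. \<exists>j<tdims X ! n. a n j \<noteq> 0"
    and e: "\<forall>i. valid_index (tdims X) i \<longrightarrow> tent X i = (\<Prod>n<order X. a n (i ! n))"
    using r unfolding rank_one_def by blast
  define i where "i = map (\<lambda>n. SOME j. j < tdims X ! n \<and> a n j \<noteq> 0) [0..<order X]"
  have ii: "i ! n < tdims X ! n \<and> a n (i ! n) \<noteq> 0" if "n < order X" for n
    using someI_ex[OF a[rule_format, OF that]] that unfolding i_def by simp
  have v: "valid_index (tdims X) i" using ii unfolding valid_index_def i_def order_def by simp
  have "(\<Prod>n<order X. a n (i ! n)) \<noteq> 0" using ii by (simp add: prod_zero_iff)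
  then have "tent X i \<noteq> 0" using e v by simp
  then show ?thesis unfolding is_zero_def by blast
qed

lemma sub_rank_one:
  assumes ZY: "subtensor Z Y" and r: "rank_one Y" shows "is_zero Z \<or> rank_one Z"
proof -
  obtain s where s: "sub_by s Z Y" and tZ: "is_tensor Z" and o: "order Z = order Y"
    using ZY unfolding subtensor_iff by blast
  obtain a where e: "\<forall>i. valid_index (tdims Y) i \<longrightarrow> tent Y i = (\<Prod>n<order Y. a n (i ! n))"
    using r unfolding rank_one_def by blast
  define b where "b = (\<lambda>n j. a n (s n j))"
  have eZ: "tent Z j = (\<Prod>n<order Z. b n (j ! n))" if v: "valid_index (tdims Z) j" for j
  proof -
    let ?j = "map (\<lambda>n. s n (j ! n)) [0..<order Y]"
    have vj: "valid_index (tdims Y) ?j"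
      using v s o unfolding valid_index_def sub_by_def order_def by auto
    have "tent Z j = tent Y ?j" using s v unfolding sub_by_def by auto
    also have "\<dots> = (\<Prod>n<order Y. a n (?j ! n))" using e vj by auto
    also have "\<dots> = (\<Prod>n<order Z. b n (j ! n))" unfolding b_def using o by (intro prod.cong) auto
    finally show ?thesis .
  qed
  show ?thesis
  proof (cases "\<forall>n<order Z. \<exists>j<tdims Z ! n. b n j \<noteq> 0")
    case True
    then have "rank_one Z" unfolding rank_one_def using eZ by blast
    then show ?thesis by simp
  next
    case False
    then obtain n where n: "n < order Z" "\<forall>j<tdims Z ! n. b n j = 0" by auto
    have "tent Z j = 0" for j
    proof (cases "valid_index (tdims Z) j")
      case True
      then have "b n (j ! n) = 0" using n unfolding valid_index_def order_def by auto
      then show ?thesis using eZ[OF True] n(1) by (metis finite_lessThan lessThan_iff prod_zero_iff)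
    next
      case False then show ?thesis using tZ unfolding is_tensor_def by auto
    qed
    then show ?thesis unfolding is_zero_def by simp
  qed
qed

lemma order1:
  assumes t: "is_tensor X" and o: "order X = 1" shows "is_zero X \<or> rank_one X"
proof -
  define a where "a = (\<lambda>(n::nat) j. tent X [j])"
  have e: "tent X i = (\<Prod>n<order X. a n (i ! n))" if v: "valid_index (tdims X) i" for i
  proof -
    have "length i = 1" using v o unfolding valid_index_def order_def by simp
    then have "i = [i ! 0]" by (cases i) auto
    then show ?thesis using o unfolding a_def by simp
  qed
  show ?thesis
  proof (cases "is_zero X")
    case False
    then obtain i where i: "tent X i \<noteq> 0" unfolding is_zero_def by auto
    then have v: "valid_index (tdims X) i" using t unfolding is_tensor_def by auto
    then have "a 0 (i ! 0) \<noteq> 0" using e[OF v] o i by simp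
    moreover have "i ! 0 < tdims X ! 0" using v o unfolding valid_index_def order_def by simp
    ultimately have "\<forall>n<order X. \<exists>j<tdims X ! n. a n j \<noteq> 0" using o unfolding a_def by auto
    then show ?thesis unfolding rank_one_def using e by blast
  qed simp
qed

lemma id_simps:
  "tdims (ident_tensor M N) = replicate N M" "order (ident_tensor M N) = N"
  "tent (ident_tensor M N) i = (if valid_index (replicate N M) i \<and> (\<forall>n<N. i ! n = i ! 0) then 1 else 0)"
  by (simp_all add: ident_tensor_def order_def)

lemma id_tensor: "1 \<le> M \<Longrightarrow> 1 \<le> N \<Longrightarrow> is_tensor (ident_tensor M N)"
  unfolding is_tensor_def id_simps by auto

lemma id_tensor_D: "is_tensor (ident_tensor M N) \<Longrightarrow> 1 \<le> M \<and> 1 \<le> N"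
  unfolding is_tensor_def id_simps by (cases N) auto

lemma id_nz: "1 \<le> M \<Longrightarrow> \<not> is_zero (ident_tensor M N)"
proof -
  assume M: "1 \<le> M"
  have "tent (ident_tensor M N) (replicate N 0) = 1"
    unfolding id_simps using M by (auto simp: valid_index_def)
  then show ?thesis unfolding is_zero_def by (metis zero_neq_one)
qed

lemma id_r1: "rank_one (ident_tensor 1 N)"
  unfolding rank_one_def
proof (intro exI[of _ "\<lambda>n j. 1"] conjI allI impI)
  fix i assume v: "valid_index (tdims (ident_tensor 1 N)) i"
  then have "\<forall>n<N. i ! n = 0" unfolding id_simps valid_index_def by auto
  then show "tent (ident_tensor 1 N) i = (\<Prod>n<order (ident_tensor 1 N). 1)"
    using v unfolding id_simps by simp
qed (auto simp: id_simps)

lemma prod_split2: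
  fixes h :: "nat \<Rightarrow> real"
  assumes "2 \<le> N"
  shows "(\<Prod>n<N. h n) = h 0 * (h 1 * (\<Prod>n<N - 2. h (Suc (Suc n))))"
proof -
  obtain K where K: "N = Suc (Suc K)" using assms by (metis add_2_eq_Suc le_Suc_ex)
  show ?thesis by (simp only: K prod.lessThan_Suc_shift) simp
qed

lemma id_not_r1:
  assumes M: "2 \<le> M" and N: "2 \<le> N" shows "\<not> rank_one (ident_tensor M N)"
proof
  assume "rank_one (ident_tensor M N)"
  then obtain a where e: "\<And>i. valid_index (replicate N M) i \<Longrightarrow>
      tent (ident_tensor M N) i = (\<Prod>n<N. a n (i ! n))"
    unfolding rank_one_def id_simps(1,2) by blast
  define R where "R = (\<lambda>c. \<Prod>n<N - 2. a (Suc (Suc n)) (c::nat))"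
  let ?za = "replicate N (0::nat)"
  let ?zb = "replicate N (1::nat)"
  let ?zc = "(replicate N (0::nat))[1 := 1]"
  have v0: "valid_index (replicate N M) ?za" using M by (auto simp: valid_index_def)
  have v1: "valid_index (replicate N M) ?zb" using M by (auto simp: valid_index_def)
  have "\<forall>n<N. ?zc ! n < M"
  proof (intro allI impI)
    fix n assume "n < N" then show "?zc ! n < M" using M by (cases "n = 1") (auto simp: nth_list_update)
  qed
  then have v01: "valid_index (replicate N M) ?zc" unfolding valid_index_def by simp
  have t0: "tent (ident_tensor M N) ?za = 1" using v0 unfolding id_simps by auto
  have t1: "tent (ident_tensor M N) ?zb = 1" using v1 unfolding id_simps by auto
  have nd: "\<not> (\<forall>n<N. ?zc ! n = ?zc ! 0)"
  proof
    assume "\<forall>n<N. ?zc ! n = ?zc ! 0"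
    then have "?zc ! 1 = ?zc ! 0" using N by (metis Suc_1 Suc_le_lessD)
    then show False using N by simp
  qed
  have t01: "tent (ident_tensor M N) ?zc = 0" using nd unfolding id_simps by simp
  have p0: "(\<Prod>n<N. a n (?za ! n)) = a 0 0 * (a 1 0 * R 0)"
    unfolding prod_split2[OF N] R_def using N by simp
  have p1: "(\<Prod>n<N. a n (?zb ! n)) = a 0 1 * (a 1 1 * R 1)"
    unfolding prod_split2[OF N] R_def using N by simp
  have p01: "(\<Prod>n<N. a n (?zc ! n)) = a 0 0 * (a 1 1 * R 0)"
    unfolding prod_split2[OF N] R_def using N by (simp add: nth_list_update)
  have h1: "a 0 0 * (a 1 0 * R 0) = 1" using e[OF v0] t0 p0 by metis
  have h2: "a 0 1 * (a 1 1 * R 1) = 1" using e[OF v1] t1 p1 by metis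
  have h3: "a 0 0 * (a 1 1 * R 0) = 0" using e[OF v01] t01 p01 by metis
  from h3 have "a 0 0 = 0 \<or> a 1 1 = 0 \<or> R 0 = 0" by simp
  then show False using h1 h2 by (elim disjE) simp_all
qed

lemma MM_simps:
  "dim_row (mode_matrix X p q) = tdims X ! p" "dim_col (mode_matrix X p q) = tdims X ! q"
  "mode_matrix X p q \<in> carrier_mat (tdims X ! p) (tdims X ! q)"
  by (simp_all add: mode_matrix_def)

lemma MM_entry:
  "x < tdims X ! p \<Longrightarrow> y < tdims X ! q \<Longrightarrow> mode_matrix X p q $$ (x, y) =
     tent X (map (\<lambda>n. if n = p then x else if n = q then y else 0) [0..<order X])"
  by (simp add: mode_matrix_def)

lemma MM_scale: "mode_matrix (scale_tensor c X) p q = c \<cdot>\<^sub>m mode_matrix X p q"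
  by (rule eq_matI) (auto simp: MM_simps MM_entry)

lemma MM_swap:
  assumes "p \<noteq> q" shows "mode_matrix X q p = transpose_mat (mode_matrix X p q)"
proof (rule eq_matI)
  fix i j assume "i < dim_row (transpose_mat (mode_matrix X p q))" "j < dim_col (transpose_mat (mode_matrix X p q))"
  then show "mode_matrix X q p $$ (i, j) = transpose_mat (mode_matrix X p q) $$ (i, j)"
    using assms by (auto simp: MM_simps MM_entry intro!: arg_cong[where f="tent X"])
qed (auto simp: MM_simps)

lemma id_MM: "mode_matrix (ident_tensor M 2) 0 1 = 1\<^sub>m M"
proof (rule eq_matI)
  fix i j assume "i < dim_row (1\<^sub>m M)" "j < dim_col (1\<^sub>m M)"
  then have ij: "i < M" "j < M" by auto
  have m: "map (\<lambda>n. if n = 0 then i else if n = 1 then j else 0) [0..<2] = [i, j]"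
    by (simp add: upt_rec)
  have "(\<forall>n<2. [i, j] ! n = [i, j] ! 0) \<longleftrightarrow> i = j"
    by (auto simp: less_2_cases_iff)
  then show "mode_matrix (ident_tensor M 2) 0 1 $$ (i, j) = 1\<^sub>m M $$ (i, j)"
    using ij by (simp add: MM_entry id_simps m valid_index_def less_2_cases_iff)
qed (auto simp: MM_simps id_simps)

lemma MM_perm:
  assumes mb: "mode_perm_by \<pi> X Y" and o: "order Y = order X" and tY: "is_tensor Y"
    and p: "p < order X" and q: "q < order X" and pq: "p \<noteq> q"
  shows "mode_matrix Y (\<pi> p) (\<pi> q) = mode_matrix X p q"
proof -
  have pp: "\<pi> permutes {..<order X}" using mb unfolding mode_perm_by_def by auto
  note pf = perm_facts[OF pp]
  have dp: "tdims Y ! \<pi> p = tdims X ! p" and dq: "tdims Y ! \<pi> q = tdims X ! q"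
    using mb p q unfolding mode_perm_by_def by auto
  show ?thesis
  proof (rule eq_matI)
    fix x y assume "x < dim_row (mode_matrix X p q)" "y < dim_col (mode_matrix X p q)"
    then have x: "x < tdims X ! p" and y: "y < tdims X ! q" by (auto simp: MM_simps)
    let ?i = "map (\<lambda>n. if n = \<pi> p then x else if n = \<pi> q then y else 0) [0..<order Y]"
    have pos: "\<forall>n<order Y. 0 < tdims Y ! n" using tY unfolding is_tensor_def order_def by simp
    have "?i ! n < tdims Y ! n" if n: "n < order Y" for n
      using n x y dp dq pos by simp
    then have v: "valid_index (tdims Y) ?i"
      unfolding valid_index_def order_def[symmetric] by simp
    have "tent Y ?i = tent X (map (\<lambda>k. ?i ! \<pi> k) [0..<order X])"
      using mb v unfolding mode_perm_by_def by blast
    also have "map (\<lambda>k. ?i ! \<pi> k) [0..<order X] = map (\<lambda>n. if n = p then x else if n = q then y else 0) [0..<order X]"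
    proof (rule map_cong[OF refl])
      fix k assume "k \<in> set [0..<order X]"
      then have k: "k < order X" by simp
      then have "\<pi> k < order Y" using pf(2) o by simp
      then have "?i ! \<pi> k = (if \<pi> k = \<pi> p then x else if \<pi> k = \<pi> q then y else 0)" by simp
      then show "?i ! \<pi> k = (if k = p then x else if k = q then y else 0)" using pf(7) by simp
    qed
    finally show "mode_matrix Y (\<pi> p) (\<pi> q) $$ (x, y) = mode_matrix X p q $$ (x, y)"
      using x y dp dq by (simp add: MM_entry)
  qed (auto simp: MM_simps dp dq)
qed

definition sw :: "nat \<Rightarrow> nat \<Rightarrow> nat \<Rightarrow> nat" where
  "sw p q = Transposition.transpose 1 q \<circ> Transposition.transpose 0 p"

lemma sw_facts:
  assumes "p < q" "q < N"
  shows "sw p q permutes {..<N}" "sw p q p = 0" "sw p q q = 1"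
proof -
  show "sw p q permutes {..<N}" unfolding sw_def
    by (rule permutes_compose[OF permutes_swap_id permutes_swap_id]) (use assms in auto)
  show "sw p q p = 0" "sw p q q = 1" unfolding sw_def using assms
    by (auto simp: Transposition.transpose_def)
qed

lemma move01:
  assumes tZ: "is_tensor Z" and pq: "p < q" "q < order Z"
    and d1: "\<forall>n<order Z. n \<noteq> p \<and> n \<noteq> q \<longrightarrow> tdims Z ! n = 1"
  defines "Z2 \<equiv> permT (sw p q) Z"
  shows "is_tensor Z2" "mode_perm Z Z2" "order Z2 = order Z" "2 \<le> order Z2"
    "\<forall>n. 2 \<le> n \<and> n < order Z2 \<longrightarrow> tdims Z2 ! n = 1"
    "mode_matrix Z2 0 1 = mode_matrix Z p q"
proof -
  note sf = sw_facts[OF pq]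
  note pf = perm_facts[OF sf(1)]
  note PT = permT_tensor[OF tZ sf(1)]
  show t2: "is_tensor Z2" "mode_perm Z Z2" unfolding Z2_def using PT by auto
  show o2: "order Z2 = order Z" unfolding Z2_def by (simp add: permT_simps)
  show "2 \<le> order Z2" using o2 pq by simp
  show "\<forall>n. 2 \<le> n \<and> n < order Z2 \<longrightarrow> tdims Z2 ! n = 1"
  proof (intro allI impI)
    fix n assume n: "2 \<le> n \<and> n < order Z2"
    have "ipm (sw p q) n \<noteq> p"
    proof
      assume "ipm (sw p q) n = p"
      then have "n = 0" using sf(2) pf(3)[of n] by simp
      then show False using n by simp
    qed
    moreover have "ipm (sw p q) n \<noteq> q"
    proof
      assume "ipm (sw p q) n = q"
      then have "n = 1" using sf(3) pf(3)[of n] by simp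
      then show False using n by simp
    qed
    moreover have "ipm (sw p q) n < order Z" using pf(1) n o2 by auto
    ultimately show "tdims Z2 ! n = 1" using d1 n o2 unfolding Z2_def by (simp add: permT_simps pdims_nth)
  qed
  have "mode_matrix Z2 (sw p q p) (sw p q q) = mode_matrix Z p q"
    unfolding Z2_def by (rule MM_perm[OF PT(2) _ PT(1)]) (use pq in \<open>simp_all add: permT_simps\<close>)
  then show "mode_matrix Z2 0 1 = mode_matrix Z p q" using sf by simp
qed

lemma sim_gen_cases:
  assumes "sim_gen A B"
  obtains (sc) c where "c \<noteq> 0" "B = scale_tensor c A"
  | (pm) \<pi> where "mode_perm_by \<pi> A B" "order B = order A" "is_tensor A" "is_tensor B"
  using assms unfolding sim_gen_def mode_perm_iff by blast

lemma inv_dims: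
  assumes "tsim X Y" "is_tensor X" "\<forall>n<order X. tdims X ! n \<le> D"
  shows "\<forall>n<order Y. tdims Y ! n \<le> D"
proof (rule tsim_induct[OF assms(1,2), of "\<lambda>Y. \<forall>n<order Y. tdims Y ! n \<le> D"])
  show "\<forall>n<order X. tdims X ! n \<le> D" using assms(3) .
next
  fix A B assume tA: "is_tensor A" and PA: "\<forall>n<order A. tdims A ! n \<le> D" and g: "sim_gen A B"
  from g show "\<forall>n<order B. tdims B ! n \<le> D"
  proof (cases rule: sim_gen_cases)
    case (sc c) then show ?thesis using PA by simp
  next
    case (pm \<pi>)
    have p: "\<pi> permutes {..<order A}" using pm(1) unfolding mode_perm_by_def by auto
    show ?thesis
    proof (intro allI impI)
      fix n assume n: "n < order B"
      then have "tdims B ! n = tdims A ! ipm \<pi> n" using mp_dims[OF pm(1)] pm(2) by simp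
      moreover have "ipm \<pi> n < order A" using perm_facts(1)[OF p] n pm(2) by simp
      ultimately show "tdims B ! n \<le> D" using PA by simp
    qed
  qed
qed

definition Sset :: "tensor \<Rightarrow> nat set" where
  "Sset X = {M. \<exists>Y. tsim X Y \<and> subtensor (ident_tensor M (order X)) Y}
            \<union> {k. \<exists>Y. tsim X Y \<and> k \<in> submatrix_ranks Y} \<union> {2}"

lemma submatrix_ranks_cases:
  assumes "k \<in> submatrix_ranks Y"
  shows "(\<exists>Z p q. subtensor Z Y \<and> p < q \<and> q < order Y \<and>
          (\<forall>n<order Y. n \<noteq> p \<and> n \<noteq> q \<longrightarrow> tdims Z ! n = 1) \<and>
          k = mat_rank (mode_matrix Z p q)) \<or> k \<le> 1"
  using assms unfolding submatrix_ranks_def by auto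

lemma submatrix_ranks_mono:
  assumes "subtensor Y X" shows "submatrix_ranks Y \<subseteq> submatrix_ranks X"
proof -
  have o: "order Y = order X" using assms unfolding subtensor_def by auto
  show ?thesis unfolding submatrix_ranks_def o using sub_trans[OF _ assms] by blast
qed

lemma Sbound:
  assumes tX: "is_tensor X" and D: "\<forall>n<order X. tdims X ! n \<le> D" and k: "k \<in> Sset X"
  shows "k \<le> max D 2"
proof -
  consider (a) Y where "tsim X Y" "subtensor (ident_tensor k (order X)) Y"
    | (b) Y where "tsim X Y" "k \<in> submatrix_ranks Y" | (c) "k = 2"
    using k unfolding Sset_def by blast
  then show ?thesis
  proof cases
    case (a Y)
    have tY: "is_tensor Y" using tsim_tensor[OF a(1) tX] .
    have oY: "order Y = order X" using tsim_order[OF a(1) tX] .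
    have DY: "\<forall>n<order Y. tdims Y ! n \<le> D" using inv_dims[OF a(1) tX D] .
    have o0: "0 < order X" using tX unfolding is_tensor_def order_def by auto
    have "tdims (ident_tensor k (order X)) ! 0 \<le> tdims Y ! 0"
      using sub_dims_le[OF a(2)] o0 oY by simp
    then have "k \<le> tdims Y ! 0" using o0 by (simp add: id_simps)
    then show ?thesis using DY o0 oY by fastforce
  next
    case (b Y)
    have DY: "\<forall>n<order Y. tdims Y ! n \<le> D" using inv_dims[OF b(1) tX D] .
    from submatrix_ranks_cases[OF b(2)] show ?thesis
    proof
      assume "\<exists>Z p q. subtensor Z Y \<and> p < q \<and> q < order Y \<and>
          (\<forall>n<order Y. n \<noteq> p \<and> n \<noteq> q \<longrightarrow> tdims Z ! n = 1) \<and> k = mat_rank (mode_matrix Z p q)"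
      then obtain Z p q where Z: "subtensor Z Y" "p < q" "q < order Y" "k = mat_rank (mode_matrix Z p q)"
        by blast
      have "k \<le> tdims Z ! p" using Z(4) mat_rank_le_row[of "mode_matrix Z p q"] by (simp add: MM_simps)
      also have "\<dots> \<le> tdims Y ! p" using sub_dims_le[OF Z(1)] Z(2,3) by simp
      also have "\<dots> \<le> D" using DY Z(2,3) by simp
      finally show ?thesis by simp
    qed simp
  qed simp
qed

lemma Sfinite:
  assumes tX: "is_tensor X" shows "finite (Sset X)"
proof -
  have "\<forall>n<order X. tdims X ! n \<le> sum_list (tdims X)"
    unfolding order_def using elem_le_sum_list by blast
  then have "Sset X \<subseteq> {..max (sum_list (tdims X)) 2}" using Sbound[OF tX] by blast
  then show ?thesis using finite_subset by blast
qed

lemma two_in_Sset: "2 \<in> Sset X" unfolding Sset_def by simp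

lemma inv_sub:
  assumes "tsim Y Y'" "subtensor Y X"
  shows "\<exists>X'. tsim X X' \<and> subtensor Y' X'"
proof -
  have tY: "is_tensor Y" using assms(2) unfolding subtensor_def by auto
  show ?thesis
  proof (rule tsim_induct[OF assms(1) tY, of "\<lambda>Y'. \<exists>X'. tsim X X' \<and> subtensor Y' X'"])
    show "\<exists>X'. tsim X X' \<and> subtensor Y X'" using assms(2) tsim_refl by blast
  next
    fix A B assume tA: "is_tensor A" and PA: "\<exists>X'. tsim X X' \<and> subtensor A X'" and g: "sim_gen A B"
    obtain X' where X': "tsim X X'" "subtensor A X'" using PA by blast
    have tX': "is_tensor X'" and oA: "order A = order X'" using X'(2) unfolding subtensor_def by auto
    from g show "\<exists>X'. tsim X X' \<and> subtensor B X'"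
    proof (cases rule: sim_gen_cases)
      case (sc c)
      have "sim_gen X' (scale_tensor c X')" using tX' sc(1) unfolding sim_gen_def by blast
      then have "tsim X (scale_tensor c X')" using tsim_step[OF X'(1)] by blast
      moreover have "subtensor B (scale_tensor c X')" using sub_scale[OF X'(2)] sc(2) by simp
      ultimately show ?thesis by blast
    next
      case (pm \<pi>)
      have p: "\<pi> permutes {..<order X'}" using pm(1) oA unfolding mode_perm_by_def by auto
      note PT = permT_tensor[OF tX' p]
      have "sim_gen X' (permT \<pi> X')" using tX' PT(3) unfolding sim_gen_def by blast
      then have "tsim X (permT \<pi> X')" using tsim_step[OF X'(1)] by blast
      moreover have "subtensor (permT \<pi> A) (permT \<pi> X')"
        using sub_perm(1)[OF X'(2) PT(2) PT(1)] by (simp add: permT_simps)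
      moreover have "B = permT \<pi> A" using mp_eq[OF pm(4) pm(2) pm(1)] .
      ultimately show ?thesis by blast
    qed
  qed
qed

lemma Sset_mono:
  assumes "subtensor Y X" shows "Sset Y \<subseteq> Sset X"
proof -
  have o: "order Y = order X" using assms unfolding subtensor_def by auto
  show ?thesis unfolding Sset_def o
  proof (intro Un_mono subsetI)
    fix M assume "M \<in> {M. \<exists>Y'. tsim Y Y' \<and> subtensor (ident_tensor M (order X)) Y'}"
    then obtain Y' where "tsim Y Y'" "subtensor (ident_tensor M (order X)) Y'" by blast
    then show "M \<in> {M. \<exists>Y. tsim X Y \<and> subtensor (ident_tensor M (order X)) Y}"
      using inv_sub[OF _ assms] sub_trans by blast
  next
    fix k assume "k \<in> {k. \<exists>Y'. tsim Y Y' \<and> k \<in> submatrix_ranks Y'}"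
    then obtain Y' where "tsim Y Y'" "k \<in> submatrix_ranks Y'" by blast
    then show "k \<in> {k. \<exists>Y. tsim X Y \<and> k \<in> submatrix_ranks Y}"
      using inv_sub[OF _ assms] submatrix_ranks_mono by blast
  qed simp
qed

lemma QZC_D:
  assumes "QZC s"
  shows "\<And>X. is_tensor X \<Longrightarrow> (s X = 0 \<longleftrightarrow> is_zero X) \<and> (s X = 1 \<longleftrightarrow> rank_one X)"
    "\<And>M N. 1 \<le> M \<Longrightarrow> 2 \<le> N \<Longrightarrow> s (ident_tensor M N) = M"
    "\<And>X. is_tensor X \<Longrightarrow> 2 \<le> order X \<Longrightarrow> (\<forall>n. 2 \<le> n \<and> n < order X \<longrightarrow> tdims X ! n = 1) \<Longrightarrow>
          s X = mat_rank (mode_matrix X 0 1)"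
    "\<And>X \<alpha>. is_tensor X \<Longrightarrow> \<alpha> \<noteq> 0 \<Longrightarrow> s (scale_tensor \<alpha> X) = s X"
    "\<And>X Y. mode_perm X Y \<Longrightarrow> s Y = s X"
    "\<And>X Y. subtensor Y X \<Longrightarrow> s Y \<le> s X"
  using assms unfolding QZC_def by blast+

lemma s_tsim:
  assumes Q: "QZC s" and "tsim X Y" "is_tensor X" shows "s Y = s X"
proof (rule tsim_induct[OF assms(2,3), of "\<lambda>Y. s Y = s X"])
  fix A B assume tA: "is_tensor A" and PA: "s A = s X" and g: "sim_gen A B"
  from g show "s B = s X"
  proof (cases rule: sim_gen_cases)
    case (sc c) then show ?thesis using QZC_D(4)[OF Q tA] PA by simp
  next
    case (pm \<pi>)
    then have "mode_perm A B" unfolding mode_perm_iff by blast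
    then show ?thesis using QZC_D(5)[OF Q] PA by simp
  qed
qed simp

lemma s_lower:
  assumes Q: "QZC s" and tX: "is_tensor X" and nz: "\<not> is_zero X" and nr: "\<not> rank_one X"
    and k: "k \<in> Sset X"
  shows "k \<le> s X"
proof -
  have s2: "2 \<le> s X" using QZC_D(1)[OF Q tX] nz nr by auto
  have N2: "2 \<le> order X"
  proof (rule ccontr)
    assume "\<not> 2 \<le> order X"
    moreover have "0 < order X" using tX unfolding is_tensor_def order_def by auto
    ultimately have "order X = 1" by simp
    then show False using order1[OF tX] nz nr by blast
  qed
  consider (a) Y where "tsim X Y" "subtensor (ident_tensor k (order X)) Y"
    | (b) Y where "tsim X Y" "k \<in> submatrix_ranks Y" | (c) "k = 2"
    using k unfolding Sset_def by blast
  then show ?thesis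
  proof cases
    case (a Y)
    have "is_tensor (ident_tensor k (order X))" using a(2) unfolding subtensor_def by auto
    then have k1: "1 \<le> k" using id_tensor_D by blast
    have "k = s (ident_tensor k (order X))" using QZC_D(2)[OF Q k1 N2] by simp
    also have "\<dots> \<le> s Y" using QZC_D(6)[OF Q a(2)] .
    also have "\<dots> = s X" using s_tsim[OF Q a(1) tX] .
    finally show ?thesis .
  next
    case (b Y)
    from submatrix_ranks_cases[OF b(2)] show ?thesis
    proof
      assume "\<exists>Z p q. subtensor Z Y \<and> p < q \<and> q < order Y \<and>
          (\<forall>n<order Y. n \<noteq> p \<and> n \<noteq> q \<longrightarrow> tdims Z ! n = 1) \<and> k = mat_rank (mode_matrix Z p q)"
      then obtain Z p q where Z: "subtensor Z Y" "p < q" "q < order Y"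
        "\<forall>n<order Y. n \<noteq> p \<and> n \<noteq> q \<longrightarrow> tdims Z ! n = 1" "k = mat_rank (mode_matrix Z p q)"
        by blast
      have tZ: "is_tensor Z" and oZ: "order Z = order Y" using Z(1) unfolding subtensor_def by auto
      note mv = move01[OF tZ, of p q, unfolded oZ, OF Z(2,3) Z(4)]
      have "k = mat_rank (mode_matrix (permT (sw p q) Z) 0 1)" using mv(6) Z(5) by simp
      also have "\<dots> = s (permT (sw p q) Z)" using QZC_D(3)[OF Q mv(1) mv(4) mv(5)] by simp
      also have "\<dots> = s Z" using QZC_D(5)[OF Q mv(2)] .
      also have "\<dots> \<le> s Y" using QZC_D(6)[OF Q Z(1)] .
      also have "\<dots> = s X" using s_tsim[OF Q b(1) tX] .
      finally show ?thesis .
    next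
      assume "k \<le> 1" then show ?thesis using s2 by simp
    qed
  next
    case c then show ?thesis using s2 by simp
  qed
qed

locale mshape =
  fixes X :: tensor
  assumes tX: "is_tensor X" and N2: "2 \<le> order X"
    and d1: "\<forall>n. 2 \<le> n \<and> n < order X \<longrightarrow> tdims X ! n = 1"
begin

abbreviation "A \<equiv> mode_matrix X 0 1"

lemma idx_eq:
  assumes v: "valid_index (tdims X) i"
  shows "i = map (\<lambda>n. if n = 0 then i ! 0 else if n = 1 then i ! 1 else 0) [0..<order X]"
proof (rule nth_equalityI)
  show "length i = length (map (\<lambda>n. if n = 0 then i ! 0 else if n = 1 then i ! 1 else 0) [0..<order X])"
    using v unfolding valid_index_def order_def by simp
next
  fix n assume "n < length i"
  then have n: "n < order X" using v unfolding valid_index_def order_def by simp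
  show "i ! n = map (\<lambda>n. if n = 0 then i ! 0 else if n = 1 then i ! 1 else 0) [0..<order X] ! n"
  proof (cases "2 \<le> n")
    case True
    then have "i ! n < 1" using v d1 n unfolding valid_index_def order_def by auto
    then show ?thesis using True n by simp
  next
    case False
    then have "n = 0 \<or> n = 1" by auto
    then show ?thesis using n by auto
  qed
qed

lemma valid01:
  assumes v: "valid_index (tdims X) i" shows "i ! 0 < tdims X ! 0" "i ! 1 < tdims X ! 1"
proof -
  have "0 < length (tdims X)" "1 < length (tdims X)" using N2 unfolding order_def by auto
  then show "i ! 0 < tdims X ! 0" "i ! 1 < tdims X ! 1" using v unfolding valid_index_def by blast+
qed

lemma mx_entry:
  assumes v: "valid_index (tdims X) i" shows "tent X i = A $$ (i ! 0, i ! 1)"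
proof -
  have "tent X i = tent X (map (\<lambda>n. if n = 0 then i ! 0 else if n = 1 then i ! 1 else 0) [0..<order X])"
    using arg_cong[OF idx_eq[OF v], of "tent X"] .
  also have "\<dots> = A $$ (i ! 0, i ! 1)" by (rule MM_entry[symmetric, OF valid01[OF v]])
  finally show ?thesis .
qed

lemma idx_valid:
  assumes "x < tdims X ! 0" "y < tdims X ! 1"
  shows "valid_index (tdims X) (map (\<lambda>n. if n = 0 then x else if n = 1 then y else 0) [0..<order X])"
  using assms tX d1 unfolding valid_index_def is_tensor_def order_def by auto

lemma mx_zero: "is_zero X \<Longrightarrow> mat_rank A = 0"
proof -
  assume z: "is_zero X"
  have "A = 0\<^sub>m (tdims X ! 0) (tdims X ! 1)"
    by (rule eq_matI) (use z in \<open>auto simp: MM_simps MM_entry is_zero_def\<close>)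
  then show ?thesis unfolding mat_rank_def using vec_space.rank_0I by (simp add: MM_simps)
qed

lemma mx_nz: "\<not> is_zero X \<Longrightarrow> mat_rank A \<noteq> 0"
proof
  assume nz: "\<not> is_zero X" and r: "mat_rank A = 0"
  obtain i where i: "tent X i \<noteq> 0" using nz unfolding is_zero_def by auto
  then have v: "valid_index (tdims X) i" using tX unfolding is_tensor_def by auto
  have "A $$ (i ! 0, i ! 1) = 0" using mat_rank_0_imp[OF r] valid01[OF v] by (simp add: MM_simps)
  then show False using i mx_entry[OF v] by simp
qed

lemma mx_r1: "rank_one X \<Longrightarrow> mat_rank A \<le> 1"
proof -
  assume "rank_one X"
  then obtain a where e: "\<And>i. valid_index (tdims X) i \<Longrightarrow> tent X i = (\<Prod>n<order X. a n (i ! n))"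
    unfolding rank_one_def by blast
  define c where "c = (\<Prod>n<order X - 2. a (Suc (Suc n)) 0)"
  have "A = mat (tdims X ! 0) (tdims X ! 1) (\<lambda>(x, y). (a 0 x * c) * a 1 y)"
  proof (rule eq_matI)
    fix x y assume "x < dim_row (mat (tdims X ! 0) (tdims X ! 1) (\<lambda>(x, y). (a 0 x * c) * a 1 y))"
      "y < dim_col (mat (tdims X ! 0) (tdims X ! 1) (\<lambda>(x, y). (a 0 x * c) * a 1 y))"
    then have x: "x < tdims X ! 0" and y: "y < tdims X ! 1" by auto
    let ?i = "map (\<lambda>n. if n = 0 then x else if n = 1 then y else 0) [0..<order X]"
    have "A $$ (x, y) = tent X ?i" by (rule MM_entry[OF x y])
    also have "\<dots> = (\<Prod>n<order X. a n (?i ! n))" using e[OF idx_valid[OF x y]] .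
    also have "\<dots> = a 0 x * (a 1 y * c)"
      unfolding prod_split2[OF N2] c_def using N2 by simp
    finally show "A $$ (x, y) = mat (tdims X ! 0) (tdims X ! 1) (\<lambda>(x, y). (a 0 x * c) * a 1 y) $$ (x, y)"
      using x y by simp
  qed (auto simp: MM_simps)
  then show ?thesis using mat_rank_product_le1[of "tdims X ! 0" "tdims X ! 1" "\<lambda>x. a 0 x * c" "a 1"] by simp
qed

lemma mx_le1: "mat_rank A \<le> 1 \<Longrightarrow> is_zero X \<or> rank_one X"
proof -
  assume "mat_rank A \<le> 1"
  then obtain f g where fg: "\<And>x y. x < tdims X ! 0 \<Longrightarrow> y < tdims X ! 1 \<Longrightarrow> A $$ (x, y) = f x * g y"
    using mat_rank_le1_imp by (fastforce simp: MM_simps)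
  show ?thesis
  proof (cases "is_zero X")
    case False
    obtain i where i: "tent X i \<noteq> 0" using False unfolding is_zero_def by auto
    then have v: "valid_index (tdims X) i" using tX unfolding is_tensor_def by auto
    have fg0: "f (i ! 0) \<noteq> 0" "g (i ! 1) \<noteq> 0" using i mx_entry[OF v] fg valid01[OF v] by auto
    define a where "a = (\<lambda>n::nat. if n = 0 then f else if n = 1 then g else (\<lambda>_::nat. 1::real))"
    have ex: "\<forall>n<order X. \<exists>j<tdims X ! n. a n j \<noteq> 0"
    proof (intro allI impI)
      fix n assume n: "n < order X"
      show "\<exists>j<tdims X ! n. a n j \<noteq> 0"
      proof (cases "2 \<le> n")
        case True
        then have "tdims X ! n = 1" using d1 n by auto
        then show ?thesis using True unfolding a_def by auto
      next
        case False
        then have "n = 0 \<or> n = 1" by auto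
        then show ?thesis using fg0 valid01[OF v] unfolding a_def by auto
      qed
    qed
    have "tent X j = (\<Prod>n<order X. a n (j ! n))" if vj: "valid_index (tdims X) j" for j
    proof -
      have "(\<Prod>n<order X. a n (j ! n)) = a 0 (j ! 0) * (a 1 (j ! 1) * (\<Prod>n<order X - 2. a (Suc (Suc n)) (j ! Suc (Suc n))))"
        using prod_split2[OF N2] .
      also have "\<dots> = f (j ! 0) * g (j ! 1)" unfolding a_def by simp
      finally show ?thesis using mx_entry[OF vj] fg valid01[OF vj] by simp
    qed
    then have "rank_one X" unfolding rank_one_def using ex by blast
    then show ?thesis by simp
  qed simp
qed

lemma rank_ge2: "\<not> is_zero X \<Longrightarrow> \<not> rank_one X \<Longrightarrow> 2 \<le> mat_rank A"
  using mx_le1 by fastforce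

lemma inv3:
  assumes "tsim X Y"
  shows "\<forall>a b c. a < order Y \<and> b < order Y \<and> c < order Y \<and> a \<noteq> b \<and> a \<noteq> c \<and> b \<noteq> c \<longrightarrow>
     tdims Y ! a \<le> 1 \<or> tdims Y ! b \<le> 1 \<or> tdims Y ! c \<le> 1"
proof (rule tsim_induct[OF assms tX])
  show "\<forall>a b c. a < order X \<and> b < order X \<and> c < order X \<and> a \<noteq> b \<and> a \<noteq> c \<and> b \<noteq> c \<longrightarrow>
     tdims X ! a \<le> 1 \<or> tdims X ! b \<le> 1 \<or> tdims X ! c \<le> 1"
  proof (intro allI impI)
    fix a b c assume h: "a < order X \<and> b < order X \<and> c < order X \<and> a \<noteq> b \<and> a \<noteq> c \<and> b \<noteq> c"
    then have "2 \<le> a \<or> 2 \<le> b \<or> 2 \<le> c" by auto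
    then show "tdims X ! a \<le> 1 \<or> tdims X ! b \<le> 1 \<or> tdims X ! c \<le> 1" using d1 h by auto
  qed
next
  fix P B assume tA: "is_tensor P" and PA: "\<forall>a b c. a < order P \<and> b < order P \<and> c < order P \<and> a \<noteq> b \<and> a \<noteq> c \<and> b \<noteq> c \<longrightarrow>
     tdims P ! a \<le> 1 \<or> tdims P ! b \<le> 1 \<or> tdims P ! c \<le> 1" and g: "sim_gen P B"
  from g show "\<forall>a b c. a < order B \<and> b < order B \<and> c < order B \<and> a \<noteq> b \<and> a \<noteq> c \<and> b \<noteq> c \<longrightarrow>
     tdims B ! a \<le> 1 \<or> tdims B ! b \<le> 1 \<or> tdims B ! c \<le> 1"
  proof (cases rule: sim_gen_cases)
    case (sc c) then show ?thesis using PA by simp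
  next
    case (pm \<pi>)
    have p: "\<pi> permutes {..<order P}" using pm(1) unfolding mode_perm_by_def by auto
    note pf = perm_facts[OF p]
    note pf2 = perm_facts[OF pf(5)]
    show ?thesis
    proof (intro allI impI)
      fix a b c assume h: "a < order B \<and> b < order B \<and> c < order B \<and> a \<noteq> b \<and> a \<noteq> c \<and> b \<noteq> c"
      have "ipm \<pi> a < order P \<and> ipm \<pi> b < order P \<and> ipm \<pi> c < order P \<and>
        ipm \<pi> a \<noteq> ipm \<pi> b \<and> ipm \<pi> a \<noteq> ipm \<pi> c \<and> ipm \<pi> b \<noteq> ipm \<pi> c"
        using h pm(2) pf(1) pf2(7) by simp
      then have "tdims P ! ipm \<pi> a \<le> 1 \<or> tdims P ! ipm \<pi> b \<le> 1 \<or> tdims P ! ipm \<pi> c \<le> 1"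
        using PA by blast
      then show "tdims B ! a \<le> 1 \<or> tdims B ! b \<le> 1 \<or> tdims B ! c \<le> 1"
        using mp_dims[OF pm(1)] h pm(2) by simp
    qed
  qed
qed

definition PR :: "nat \<Rightarrow> tensor \<Rightarrow> bool" where
  "PR \<rho> Y \<longleftrightarrow> (\<forall>Z p q. subtensor Z Y \<and> p < q \<and> q < order Y \<and>
      (\<forall>n<order Y. n \<noteq> p \<and> n \<noteq> q \<longrightarrow> tdims Z ! n = 1) \<longrightarrow> mat_rank (mode_matrix Z p q) \<le> \<rho>)"

lemma PR_base:
  assumes r1: "1 \<le> mat_rank A" shows "PR (mat_rank A) X"
  unfolding PR_def
proof (intro allI impI)
  fix Z p q assume h: "subtensor Z X \<and> p < q \<and> q < order X \<and>
      (\<forall>n<order X. n \<noteq> p \<and> n \<noteq> q \<longrightarrow> tdims Z ! n = 1)"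
  then have ZX: "subtensor Z X" and pq: "p < q" "q < order X" by auto
  show "mat_rank (mode_matrix Z p q) \<le> mat_rank A"
  proof (cases "q = 1")
    case True
    then have p0: "p = 0" using pq by simp
    obtain s where s: "sub_by s Z X" and oZ: "order Z = order X" and tZ: "is_tensor Z"
      using ZX unfolding subtensor_iff by blast
    have s0: "\<forall>j<tdims Z ! 0. s 0 j < tdims X ! 0" and s1: "\<forall>j<tdims Z ! 1. s 1 j < tdims X ! 1"
      using s N2 unfolding sub_by_def by auto
    have "mode_matrix Z 0 1 = mat (tdims Z ! 0) (tdims Z ! 1) (\<lambda>(x, y). A $$ (s 0 x, s 1 y))"
    proof (rule eq_matI)
      fix x y assume "x < dim_row (mat (tdims Z ! 0) (tdims Z ! 1) (\<lambda>(x, y). A $$ (s 0 x, s 1 y)))"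
        "y < dim_col (mat (tdims Z ! 0) (tdims Z ! 1) (\<lambda>(x, y). A $$ (s 0 x, s 1 y)))"
      then have x: "x < tdims Z ! 0" and y: "y < tdims Z ! 1" by auto
      let ?i = "map (\<lambda>n. if n = 0 then x else if n = 1 then y else 0) [0..<order Z]"
      have vi: "valid_index (tdims Z) ?i" using x y tZ unfolding valid_index_def is_tensor_def order_def by auto
      let ?j = "map (\<lambda>n. s n (?i ! n)) [0..<order X]"
      have vj: "valid_index (tdims X) ?j"
        using vi s oZ unfolding valid_index_def sub_by_def order_def by auto
      have j0: "?j ! 0 = s 0 x" and j1: "?j ! 1 = s 1 y" using N2 oZ by auto
      have "mode_matrix Z 0 1 $$ (x, y) = tent Z ?i" by (rule MM_entry[OF x y])
      also have "\<dots> = tent X ?j" using s vi unfolding sub_by_def by blast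
      also have "\<dots> = A $$ (s 0 x, s 1 y)" using mx_entry[OF vj] j0 j1 by simp
      finally show "mode_matrix Z 0 1 $$ (x, y) = mat (tdims Z ! 0) (tdims Z ! 1) (\<lambda>(x, y). A $$ (s 0 x, s 1 y)) $$ (x, y)"
        using x y by simp
    qed (auto simp: MM_simps)
    moreover have "mat_rank (mat (tdims Z ! 0) (tdims Z ! 1) (\<lambda>(x, y). A $$ (s 0 x, s 1 y))) \<le> mat_rank A"
      by (rule mat_rank_reindex[OF MM_simps(3)]) (use s0 s1 in auto)
    ultimately show ?thesis using p0 True by simp
  next
    case False
    then have q2: "2 \<le> q" using pq by simp
    have "mat_rank (mode_matrix Z p q) \<le> tdims Z ! q" using mat_rank_le_col by (metis MM_simps(2))
    also have "\<dots> \<le> tdims X ! q" using sub_dims_le[OF ZX pq(2)] .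
    also have "\<dots> = 1" using d1 q2 pq by simp
    finally show ?thesis using r1 by simp
  qed
qed

lemma PR_step:
  assumes tP: "is_tensor P" and PP: "PR \<rho> P" and g: "sim_gen P B" shows "PR \<rho> B"
  using g
proof (cases rule: sim_gen_cases)
  case (sc c)
  show ?thesis unfolding PR_def
  proof (intro allI impI)
    fix Z p q assume h: "subtensor Z B \<and> p < q \<and> q < order B \<and> (\<forall>n<order B. n \<noteq> p \<and> n \<noteq> q \<longrightarrow> tdims Z ! n = 1)"
    have "subtensor (scale_tensor (1 / c) Z) (scale_tensor (1 / c) B)" using sub_scale h by blast
    then have "subtensor (scale_tensor (1 / c) Z) P" using sc scale_inv by simp
    moreover have "\<forall>n<order P. n \<noteq> p \<and> n \<noteq> q \<longrightarrow> tdims (scale_tensor (1 / c) Z) ! n = 1"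
      using h sc by simp
    moreover have "p < q" "q < order P" using h sc by simp_all
    ultimately have "mat_rank (mode_matrix (scale_tensor (1 / c) Z) p q) \<le> \<rho>" using PP unfolding PR_def by blast
    then show "mat_rank (mode_matrix Z p q) \<le> \<rho>" using sc(1) by (simp add: MM_scale mat_rank_smult)
  qed
next
  case (pm \<pi>)
  have p: "\<pi> permutes {..<order P}" using pm(1) unfolding mode_perm_by_def by auto
  note pf = perm_facts[OF p]
  define \<tau> where "\<tau> = ipm \<pi>"
  have mbi: "mode_perm_by \<tau> B P" unfolding \<tau>_def using mp_sym[OF pm(1) pm(2)] .
  have tp: "\<tau> permutes {..<order B}" using pf(5) pm(2) unfolding \<tau>_def by simp
  note tf = perm_facts[OF tp]
  show ?thesis unfolding PR_def
  proof (intro allI impI)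
    fix Z p q assume h: "subtensor Z B \<and> p < q \<and> q < order B \<and> (\<forall>n<order B. n \<noteq> p \<and> n \<noteq> q \<longrightarrow> tdims Z ! n = 1)"
    then have ZB: "subtensor Z B" and pq: "p < q" "q < order B"
      and d: "\<forall>n<order B. n \<noteq> p \<and> n \<noteq> q \<longrightarrow> tdims Z ! n = 1" by auto
    have tZ: "is_tensor Z" and oZ: "order Z = order B" using ZB unfolding subtensor_def by auto
    define Z' where "Z' = permT \<tau> Z"
    have Z'P: "subtensor Z' P" unfolding Z'_def using sub_perm(1)[OF ZB mbi tP] pm(2) by simp
    have tpZ: "\<tau> permutes {..<order Z}" using tp oZ by simp
    note PT = permT_tensor[OF tZ tpZ]
    have oZ': "order Z' = order Z" unfolding Z'_def by (simp add: permT_simps)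
    have MM: "mode_matrix Z' (\<tau> p) (\<tau> q) = mode_matrix Z p q"
      unfolding Z'_def by (rule MM_perm[OF PT(2) _ PT(1)]) (use pq oZ in \<open>simp_all add: permT_simps\<close>)
    have dZ': "tdims Z' ! n = 1" if "n < order P" "n \<noteq> \<tau> p" "n \<noteq> \<tau> q" for n
    proof -
      have "tdims Z' ! n = tdims Z ! ipm \<tau> n" unfolding Z'_def using that oZ pm(2)
        by (simp add: permT_simps pdims_nth)
      moreover have "ipm \<tau> n \<noteq> p" "ipm \<tau> n \<noteq> q" "ipm \<tau> n < order B"
        using that tf(1,3) pm(2) by (metis, metis, simp)
      ultimately show ?thesis using d by simp
    qed
    have tpq: "\<tau> p < order P" "\<tau> q < order P" "\<tau> p \<noteq> \<tau> q" using tf(2,7) pq pm(2) by auto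
    show "mat_rank (mode_matrix Z p q) \<le> \<rho>"
    proof (cases "\<tau> p < \<tau> q")
      case True
      then have "mat_rank (mode_matrix Z' (\<tau> p) (\<tau> q)) \<le> \<rho>"
        using PP Z'P tpq dZ' unfolding PR_def by blast
      then show ?thesis using MM by simp
    next
      case False
      then have lt: "\<tau> q < \<tau> p" using tpq by simp
      have "mat_rank (mode_matrix Z' (\<tau> q) (\<tau> p)) \<le> \<rho>"
        using PP Z'P tpq dZ' lt unfolding PR_def by blast
      moreover have "mode_matrix Z' (\<tau> p) (\<tau> q) = transpose_mat (mode_matrix Z' (\<tau> q) (\<tau> p))"
        using MM_swap tpq(3) by metis
      ultimately show ?thesis using MM mat_rank_transpose by metis
    qed
  qed
qed

lemma invR:
  assumes r1: "1 \<le> mat_rank A" and "tsim X Y" shows "PR (mat_rank A) Y"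
  by (rule tsim_induct[OF assms(2) tX, of "PR (mat_rank A)"]) (use PR_base[OF r1] PR_step in auto)

end

context
  fixes r :: "tensor \<Rightarrow> nat"
  assumes r1: "\<forall>X. is_tensor X \<longrightarrow> (r X = 0 \<longleftrightarrow> is_zero X) \<and> (r X = 1 \<longleftrightarrow> rank_one X)"
    and r2: "\<forall>X Y. is_tensor X \<longrightarrow> is_tensor Y \<longrightarrow> tsim X Y \<longrightarrow> r X = r Y"
    and r3: "\<forall>X. is_tensor X \<longrightarrow> \<not> is_zero X \<longrightarrow> \<not> rank_one X \<longrightarrow>
               r X = Max ({M. \<exists>Y. tsim X Y \<and> subtensor (ident_tensor M (order X)) Y}
                          \<union> {k. \<exists>Y. tsim X Y \<and> k \<in> submatrix_ranks Y} \<union> {2})"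
begin

lemma rX: "is_tensor X \<Longrightarrow> \<not> is_zero X \<Longrightarrow> \<not> rank_one X \<Longrightarrow> r X = Max (Sset X)"
  using r3 unfolding Sset_def by blast

lemma r0: "is_tensor X \<Longrightarrow> is_zero X \<Longrightarrow> r X = 0" using r1 by blast
lemma r_1: "is_tensor X \<Longrightarrow> rank_one X \<Longrightarrow> r X = 1" using r1 by blast

lemma r_q2:
  assumes M: "1 \<le> M" and N: "2 \<le> N" shows "r (ident_tensor M N) = M"
proof (cases "M = 1")
  case True
  have "is_tensor (ident_tensor M N)" using id_tensor M N by simp
  then show ?thesis using r_1 id_r1 True by simp
next
  case False
  then have M2: "2 \<le> M" using M by simp
  have t: "is_tensor (ident_tensor M N)" using id_tensor M N by simp
  have "r (ident_tensor M N) = Max (Sset (ident_tensor M N))"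
    using rX[OF t id_nz[OF M] id_not_r1[OF M2 N]] .
  also have "\<dots> = M"
  proof (rule Max_eqI)
    show "finite (Sset (ident_tensor M N))" using Sfinite[OF t] .
  next
    fix k assume "k \<in> Sset (ident_tensor M N)"
    moreover have "\<forall>n<order (ident_tensor M N). tdims (ident_tensor M N) ! n \<le> M"
      by (simp add: id_simps)
    ultimately have "k \<le> max M 2" using Sbound[OF t] by blast
    then show "k \<le> M" using M2 by simp
  next
    have o: "order (ident_tensor M N) = N" by (simp add: id_simps)
    have "tsim (ident_tensor M N) (ident_tensor M N) \<and>
        subtensor (ident_tensor M (order (ident_tensor M N))) (ident_tensor M N)"
      using o sub_refl[OF t] tsim_refl by simp
    then show "M \<in> Sset (ident_tensor M N)" unfolding Sset_def by blast
  qed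
  finally show ?thesis .
qed

lemma r_q3:
  assumes tX: "is_tensor X" and N2: "2 \<le> order X"
    and d1: "\<forall>n. 2 \<le> n \<and> n < order X \<longrightarrow> tdims X ! n = 1"
  shows "r X = mat_rank (mode_matrix X 0 1)"
proof -
  interpret mshape X using tX N2 d1 by unfold_locales
  show ?thesis
  proof (cases "is_zero X")
    case True then show ?thesis using r0[OF tX] mx_zero by simp
  next
    case nz: False
    show ?thesis
    proof (cases "rank_one X")
      case True
      then show ?thesis using r_1[OF tX True] mx_r1 mx_nz[OF nz] by simp
    next
      case nr: False
      define \<rho> where "\<rho> = mat_rank A"
      have r2': "2 \<le> \<rho>" unfolding \<rho>_def using rank_ge2[OF nz nr] .
      have "Max (Sset X) = \<rho>"
      proof (rule Max_eqI)
        show "finite (Sset X)" using Sfinite[OF tX] .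
      next
        show "\<rho> \<in> Sset X"
        proof -
          have "\<rho> \<in> submatrix_ranks X" unfolding submatrix_ranks_def \<rho>_def
            using sub_refl[OF tX] N2 d1 by (intro UnI1 CollectI exI[of _ X] exI[of _ 0] exI[of _ 1]) auto
          then show ?thesis unfolding Sset_def using tsim_refl by blast
        qed
      next
        fix k assume k: "k \<in> Sset X"
        consider (a) Y where "tsim X Y" "subtensor (ident_tensor k (order X)) Y"
          | (b) Y where "tsim X Y" "k \<in> submatrix_ranks Y" | (c) "k = 2"
          using k unfolding Sset_def by blast
        then show "k \<le> \<rho>"
        proof cases
          case (a Y)
          have oY: "order Y = order X" using tsim_order[OF a(1) tX] .
          have PRY: "PR \<rho> Y" unfolding \<rho>_def using invR a(1) r2' \<rho>_def by simp
          show ?thesis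
          proof (cases "order X = 2")
            case True
            have "subtensor (ident_tensor k 2) Y \<and> (0::nat) < 1 \<and> 1 < order Y \<and>
                (\<forall>n<order Y. n \<noteq> 0 \<and> n \<noteq> 1 \<longrightarrow> tdims (ident_tensor k 2) ! n = 1)"
              using a(2) True oY by auto
            then have "mat_rank (mode_matrix (ident_tensor k 2) 0 1) \<le> \<rho>"
              using PRY unfolding PR_def by blast
            then show ?thesis unfolding id_MM mat_rank_one .
          next
            case False
            then have N3: "3 \<le> order X" using N2 by simp
            show ?thesis
            proof (rule ccontr)
              assume "\<not> k \<le> \<rho>"
              then have k2: "2 \<le> k" using r2' by simp
              have "\<forall>n<order X. k \<le> tdims Y ! n"
                using sub_dims_le[OF a(2)] oY by (simp add: id_simps)
              moreover have "(0::nat) < order X" "(1::nat) < order X" "(2::nat) < order X" using N3 by simp_all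
              ultimately have "k \<le> tdims Y ! 0" "k \<le> tdims Y ! 1" "k \<le> tdims Y ! 2" by blast+
              then have "2 \<le> tdims Y ! 0" "2 \<le> tdims Y ! 1" "2 \<le> tdims Y ! 2" using k2 by linarith+
              moreover have "tdims Y ! 0 \<le> 1 \<or> tdims Y ! 1 \<le> 1 \<or> tdims Y ! 2 \<le> 1"
              proof -
                have "(0::nat) < order Y \<and> (1::nat) < order Y \<and> (2::nat) < order Y \<and> (0::nat) \<noteq> 1 \<and> (0::nat) \<noteq> 2 \<and> (1::nat) \<noteq> 2"
                  using oY N3 by simp
                then show ?thesis using inv3[OF a(1)] by blast
              qed
              ultimately show False by linarith
            qed
          qed
        next
          case (b Y)
          have PRY: "PR \<rho> Y" unfolding \<rho>_def using invR b(1) r2' \<rho>_def by simp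
          from submatrix_ranks_cases[OF b(2)] show ?thesis
          proof
            assume "\<exists>Z p q. subtensor Z Y \<and> p < q \<and> q < order Y \<and>
              (\<forall>n<order Y. n \<noteq> p \<and> n \<noteq> q \<longrightarrow> tdims Z ! n = 1) \<and> k = mat_rank (mode_matrix Z p q)"
            then show ?thesis using PRY unfolding PR_def by blast
          next
            assume "k \<le> 1" then show ?thesis using r2' by simp
          qed
        next
          case c then show ?thesis using r2' by simp
        qed
      qed
      then show ?thesis using rX[OF tX nz nr] \<rho>_def by simp
    qed
  qed
qed

lemma r_q6:
  assumes YX: "subtensor Y X" shows "r Y \<le> r X"
proof -
  have tY: "is_tensor Y" and tX: "is_tensor X" using YX unfolding subtensor_def by auto
  show ?thesis
  proof (cases "is_zero Y")
    case True then show ?thesis using r0[OF tY] by simp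
  next
    case nzY: False
    have nzX: "\<not> is_zero X" using sub_zero[OF YX] nzY by blast
    show ?thesis
    proof (cases "rank_one Y")
      case True
      then have "r Y = 1" using r_1[OF tY] by simp
      moreover have "r X \<noteq> 0" using r1 tX nzX by blast
      ultimately show ?thesis by simp
    next
      case nrY: False
      have nrX: "\<not> rank_one X" using sub_rank_one[OF YX] nzY nrY by blast
      have "Max (Sset Y) \<le> Max (Sset X)"
        using Max_mono[OF Sset_mono[OF YX] _ Sfinite[OF tX]] two_in_Sset by blast
      then show ?thesis using rX[OF tY nzY nrY] rX[OF tX nzX nrX] by simp
    qed
  qed
qed

lemma r_QZC: "QZC r"
  unfolding QZC_def
proof (intro conjI allI impI)
  fix X assume "is_tensor X" then show "(r X = 0) = is_zero X" "(r X = 1) = rank_one X" using r1 by blast+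
next
  fix M N :: nat assume "1 \<le> M" "2 \<le> N" then show "r (ident_tensor M N) = M" using r_q2 by blast
next
  fix X assume "is_tensor X" "2 \<le> order X" "\<forall>n. 2 \<le> n \<and> n < order X \<longrightarrow> tdims X ! n = 1"
  then show "r X = mat_rank (mode_matrix X 0 1)" using r_q3 by blast
next
  fix X and \<alpha> :: real assume t: "is_tensor X" and a: "\<alpha> \<noteq> 0"
  have "sim_gen X (scale_tensor \<alpha> X)" using t a unfolding sim_gen_def by blast
  then have "tsim X (scale_tensor \<alpha> X)" unfolding tsim_def by (rule r_into_equivclp)
  then show "r (scale_tensor \<alpha> X) = r X" using r2 t is_tensor_scale[OF t] by metis
next
  fix X Y assume m: "mode_perm X Y"
  then have t: "is_tensor X" "is_tensor Y" unfolding mode_perm_def by auto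
  have "sim_gen X Y" using m t unfolding sim_gen_def by blast
  then have "tsim X Y" unfolding tsim_def by (rule r_into_equivclp)
  then show "r Y = r X" using r2 t by metis
next
  fix X Y assume "subtensor Y X" then show "r Y \<le> r X" using r_q6 by blast
qed

lemma r_le_s: "QZC s \<Longrightarrow> is_tensor X \<Longrightarrow> r X \<le> s X"
proof -
  assume Q: "QZC s" and tX: "is_tensor X"
  show "r X \<le> s X"
  proof (cases "is_zero X")
    case True then show ?thesis using r0[OF tX] by simp
  next
    case nz: False
    show ?thesis
    proof (cases "rank_one X")
      case True then show ?thesis using r_1[OF tX] QZC_D(1)[OF Q tX] by simp
    next
      case nr: False
      have "Max (Sset X) \<le> s X"
        using Max.boundedI[OF Sfinite[OF tX]] two_in_Sset s_lower[OF Q tX nz nr] by blast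
      then show ?thesis using rX[OF tX nz nr] by simp
    qed
  qed
qed

lemma r_mu: "is_tensor X \<Longrightarrow> r X = mu X"
proof -
  assume tX: "is_tensor X"
  have "Inf {s X | s. QZC s} = r X" unfolding Inf_nat_def
  proof (rule Least_equality)
    show "r X \<in> {s X |s. QZC s}" using r_QZC by blast
  next
    fix y assume "y \<in> {s X |s. QZC s}"
    then show "r X \<le> y" using r_le_s tX by blast
  qed
  then show ?thesis unfolding mu_def by simp
qed

end

theorem proposition3p7:
  fixes r :: "tensor \<Rightarrow> nat"
  assumes r1: "\<forall>X. is_tensor X \<longrightarrow> (r X = 0 \<longleftrightarrow> is_zero X) \<and> (r X = 1 \<longleftrightarrow> rank_one X)"
    and r2: "\<forall>X Y. is_tensor X \<longrightarrow> is_tensor Y \<longrightarrow> tsim X Y \<longrightarrow> r X = r Y"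
    and r3: "\<forall>X. is_tensor X \<longrightarrow> \<not> is_zero X \<longrightarrow> \<not> rank_one X \<longrightarrow>
               r X = Max ({M. \<exists>Y. tsim X Y \<and> subtensor (ident_tensor M (order X)) Y}
                          \<union> {k. \<exists>Y. tsim X Y \<and> k \<in> submatrix_ranks Y} \<union> {2})"
  shows "\<forall>X. is_tensor X \<longrightarrow> r X = mu X"
  using r_mu[OF r1 r2 r3] by blast

end
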